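(* Let $K$ be a finite simplicial complex. If $\gamma\colon C_*(K)\to C_*(\mathbb{R}^d)$ is a homological almost-embedding, then there is a nontrivial equivariant chain map $\tilde{\gamma}\colon C_*(\widetilde{K})\to C_*(\mathbb{S}^{d-1})$.
   Context: Coefficients are $\mathbb{Z}_2$. $C_*(K)$ is the simplicial chain complex, $C_*(\mathbb{R}^d)$ and $C_*(\mathbb{S}^{d-1})$ are singular chain complexes. A chain map is nontrivial if each vertex (0-cell) is sent to a $0$-chain consisting of an odd number of points. A homological almost-embedding of $K$ in $\mathbb{R}^d$ is a nontrivial chain map $C_*(K)\to C_*(\mathbb{R}^d)$ sending disjoint simplices of $K$ to chains with disjoint supports (support = union of images of singular simplices with nonzero coefficient). The deleted product $\widetilde{K}$ is the polyhedral subcomplex of $K\times K$ consisting of cells $\sigma\times\tau$ with $\sigma\cap\tau=\emptyset$, with the free cellular $\mathbb{Z}_2$-action $(x,y)\mapsto(y,x)$; $C_*(\widetilde{K})$ denotes its cellular chain complex. $\mathbb{S}^{d-1}$ carries the antipodal action; equivariance means commuting with the induced actions on chains. *)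

theory Defs
  imports "HOL-Analysis.Analysis" "HOL-Homology.Homology"
begin

text \<open>All chains have coefficients in Z2 and are represented as finite sets of
 generators (cells / singular simplices); addition is symmetric difference.\<close>

definition symd :: "'a set \<Rightarrow> 'a set \<Rightarrow> 'a set" where
  "symd A B = (A - B) \<union> (B - A)"

definition finite_simplicial_complex :: "'v set set \<Rightarrow> bool" where
  "finite_simplicial_complex K \<longleftrightarrow> finite K \<and> (\<forall>\<sigma>\<in>K. finite \<sigma> \<and> \<sigma> \<noteq> {}) \<and>
     (\<forall>\<sigma>\<in>K. \<forall>\<tau>. \<tau> \<subseteq> \<sigma> \<and> \<tau> \<noteq> {} \<longrightarrow> \<tau> \<in> K)"

definition ksimp :: "'v set set \<Rightarrow> nat \<Rightarrow> 'v set set" where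
  "ksimp K p = {\<sigma>\<in>K. card \<sigma> = Suc p}"

definition kbd :: "'v set set \<Rightarrow> 'v set set \<Rightarrow> 'v set set" where
  "kbd K A = {\<tau>\<in>K. odd (card {\<sigma>\<in>A. \<tau> \<subseteq> \<sigma> \<and> card \<sigma> = Suc (card \<tau>)})}"

definition zchain :: "nat \<Rightarrow> 'a topology \<Rightarrow> ((nat \<Rightarrow> real) \<Rightarrow> 'a) set \<Rightarrow> bool" where
  "zchain p X c \<longleftrightarrow> finite c \<and> (\<forall>f\<in>c. singular_simplex p X f)"

definition sbd :: "nat \<Rightarrow> ((nat \<Rightarrow> real) \<Rightarrow> 'a) set \<Rightarrow> ((nat \<Rightarrow> real) \<Rightarrow> 'a) set" where
  "sbd p c = (if p = 0 then {} else
     {g. odd (card {(f, k). f \<in> c \<and> k \<le> p \<and> singular_face p k f = g})})"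

definition ssupp :: "nat \<Rightarrow> ((nat \<Rightarrow> real) \<Rightarrow> 'a) set \<Rightarrow> 'a set" where
  "ssupp p c = (\<Union>f\<in>c. f ` standard_simplex p)"

definition zchain_map :: "(nat \<Rightarrow> 'c set) \<Rightarrow> ('c set \<Rightarrow> 'c set) \<Rightarrow> 'a topology
     \<Rightarrow> (nat \<Rightarrow> 'c set \<Rightarrow> ((nat \<Rightarrow> real) \<Rightarrow> 'a) set) \<Rightarrow> bool" where
  "zchain_map cells bd X \<gamma> \<longleftrightarrow>
     (\<forall>p A B. A \<subseteq> cells p \<longrightarrow> B \<subseteq> cells p \<longrightarrow> \<gamma> p (symd A B) = symd (\<gamma> p A) (\<gamma> p B)) \<and>
     (\<forall>p A. A \<subseteq> cells p \<longrightarrow> zchain p X (\<gamma> p A)) \<and>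
     (\<forall>p A. A \<subseteq> cells (Suc p) \<longrightarrow> sbd (Suc p) (\<gamma> (Suc p) A) = \<gamma> p (bd A))"

definition hom_almost_embedding ::
  "'v set set \<Rightarrow> (nat \<Rightarrow> 'v set set \<Rightarrow> ((nat \<Rightarrow> real) \<Rightarrow> real^'n) set) \<Rightarrow> bool" where
  "hom_almost_embedding K \<gamma> \<longleftrightarrow>
     zchain_map (ksimp K) (kbd K) (euclidean :: (real^'n) topology) \<gamma> \<and>
     (\<forall>v. {v} \<in> K \<longrightarrow> odd (card (\<gamma> 0 {{v}}))) \<and>
     (\<forall>\<sigma>\<in>K. \<forall>\<tau>\<in>K. \<sigma> \<inter> \<tau> = {} \<longrightarrow>
        ssupp (card \<sigma> - 1) (\<gamma> (card \<sigma> - 1) {\<sigma>}) \<inter> ssupp (card \<tau> - 1) (\<gamma> (card \<tau> - 1) {\<tau>}) = {})"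

text \<open>Deleted product: cells \<sigma> \<times> \<tau> with \<sigma> \<inter> \<tau> = {}, of dimension dim \<sigma> + dim \<tau>.\<close>
definition dcells :: "'v set set \<Rightarrow> nat \<Rightarrow> ('v set \<times> 'v set) set" where
  "dcells K p = {(\<sigma>, \<tau>). \<sigma> \<in> K \<and> \<tau> \<in> K \<and> \<sigma> \<inter> \<tau> = {} \<and> card \<sigma> + card \<tau> = p + 2}"

definition dfacet :: "'v set set \<Rightarrow> 'v set \<times> 'v set \<Rightarrow> 'v set \<times> 'v set \<Rightarrow> bool" where
  "dfacet K c d \<longleftrightarrow>
     (fst c \<in> K \<and> fst c \<subseteq> fst d \<and> card (fst d) = Suc (card (fst c)) \<and> snd c = snd d) \<or>
     (snd c \<in> K \<and> snd c \<subseteq> snd d \<and> card (snd d) = Suc (card (snd c)) \<and> fst c = fst d)"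

definition dbd :: "'v set set \<Rightarrow> ('v set \<times> 'v set) set \<Rightarrow> ('v set \<times> 'v set) set" where
  "dbd K C = {c. odd (card {d\<in>C. dfacet K c d})}"

definition dswap :: "('v set \<times> 'v set) set \<Rightarrow> ('v set \<times> 'v set) set" where
  "dswap C = (\<lambda>(\<sigma>, \<tau>). (\<tau>, \<sigma>)) ` C"

definition santi :: "nat \<Rightarrow> ((nat \<Rightarrow> real) \<Rightarrow> 'a::real_vector) set \<Rightarrow> ((nat \<Rightarrow> real) \<Rightarrow> 'a) set" where
  "santi p c = simplex_map p uminus ` c"

definition nontrivial_equivariant_sphere_map ::
  "'v set set \<Rightarrow> (nat \<Rightarrow> ('v set \<times> 'v set) set \<Rightarrow> ((nat \<Rightarrow> real) \<Rightarrow> real^'n) set) \<Rightarrow> bool" where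
  "nontrivial_equivariant_sphere_map K g \<longleftrightarrow>
     zchain_map (dcells K) (dbd K) (top_of_set (sphere (0::real^'n) 1)) g \<and>
     (\<forall>p A. A \<subseteq> dcells K p \<longrightarrow> g p (dswap A) = santi p (g p A)) \<and>
     (\<forall>v w. ({v}, {w}) \<in> dcells K 0 \<longrightarrow> odd (card (g 0 {({v}, {w})})))"

end

theory Submission
  imports Defs
begin


definition red :: "'i set \<Rightarrow> ('i \<Rightarrow> 'b) \<Rightarrow> 'b set" where
  "red I \<phi> = {z. odd (card {i\<in>I. \<phi> i = z})}"

lemma red_subset: "red I \<phi> \<subseteq> \<phi> ` I"
proof
  fix z assume "z \<in> red I \<phi>"
  then have "{i\<in>I. \<phi> i = z} \<noteq> {}" unfolding red_def by (metis (no_types, lifting) card.empty even_zero mem_Collect_eq)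
  then show "z \<in> \<phi> ` I" by blast
qed

lemma finite_red: "finite I \<Longrightarrow> finite (red I \<phi>)"
  by (meson finite_imageI finite_subset red_subset)

lemma par_count:
  assumes "finite A"
  shows "odd (card {a\<in>A. odd (n a)}) \<longleftrightarrow> odd (sum n A)"
  using assms
proof (induction A rule: finite_induct)
  case empty then show ?case by simp
next
  case (insert x F)
  show ?case
  proof (cases "odd (n x)")
    case True
    then have "{a\<in>insert x F. odd (n a)} = insert x {a\<in>F. odd (n a)}" by auto
    moreover have "x \<notin> {a\<in>F. odd (n a)}" using insert by auto
    ultimately show ?thesis using insert True by simp
  next
    case False
    then have "{a\<in>insert x F. odd (n a)} = {a\<in>F. odd (n a)}" by auto
    then show ?thesis using insert False by simp
  qed
qed

lemma card_Sigma_filter: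
  assumes "finite A" "\<And>a. a \<in> A \<Longrightarrow> finite (J a)"
  shows "card {x\<in>Sigma A J. P x} = (\<Sum>a\<in>A. card {j\<in>J a. P (a,j)})"
proof -
  have "{x\<in>Sigma A J. P x} = Sigma A (\<lambda>a. {j\<in>J a. P (a,j)})" by auto
  then show ?thesis using assms by (simp add: card_SigmaI)
qed

lemma red_flat:
  assumes "finite A" "\<And>a. a \<in> A \<Longrightarrow> finite (J a)"
  shows "red (Sigma A (\<lambda>a. red (J a) (\<psi> a))) snd = red (Sigma A J) (\<lambda>(a,j). \<psi> a j)"
proof -
  have fin: "\<And>a. a \<in> A \<Longrightarrow> finite (red (J a) (\<psi> a))" using assms finite_red by blast
  have key: "odd (card {x\<in>Sigma A (\<lambda>a. red (J a) (\<psi> a)). snd x = z}) \<longleftrightarrow> odd (card {x\<in>Sigma A J. (\<lambda>(a,j). \<psi> a j) x = z})" for z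
  proof -
    have "card {x\<in>Sigma A (\<lambda>a. red (J a) (\<psi> a)). snd x = z} = (\<Sum>a\<in>A. card {j\<in>red (J a) (\<psi> a). j = z})"
      using card_Sigma_filter[OF assms(1) fin] by simp
    also have "\<dots> = card {a\<in>A. odd (card {j\<in>J a. \<psi> a j = z})}"
    proof -
      have "(\<Sum>a\<in>A. card {j\<in>red (J a) (\<psi> a). j = z}) = (\<Sum>a\<in>A. if odd (card {j\<in>J a. \<psi> a j = z}) then 1 else 0)"
      proof (rule sum.cong)
        fix a assume "a \<in> A"
        show "card {j\<in>red (J a) (\<psi> a). j = z} = (if odd (card {j\<in>J a. \<psi> a j = z}) then 1 else 0)"
        proof (cases "odd (card {j\<in>J a. \<psi> a j = z})")
          case True
          then have "{j\<in>red (J a) (\<psi> a). j = z} = {z}" by (auto simp: red_def)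
          then show ?thesis using True by simp
        next
          case False
          then have "{j\<in>red (J a) (\<psi> a). j = z} = {}" by (auto simp: red_def)
          then show ?thesis using False by simp
        qed
      qed simp
      also have "\<dots> = card {a\<in>A. odd (card {j\<in>J a. \<psi> a j = z})}"
        using assms(1) by (simp add: sum.If_cases Int_def conj_commute)
      finally show ?thesis .
    qed
    finally have e1: "card {x\<in>Sigma A (\<lambda>a. red (J a) (\<psi> a)). snd x = z} = card {a\<in>A. odd (card {j\<in>J a. \<psi> a j = z})}" .
    have e2: "card {x\<in>Sigma A J. (\<lambda>(a,j). \<psi> a j) x = z} = (\<Sum>a\<in>A. card {j\<in>J a. \<psi> a j = z})"
      using card_Sigma_filter[OF assms] by simp
    show "odd (card {x\<in>Sigma A (\<lambda>a. red (J a) (\<psi> a)). snd x = z}) \<longleftrightarrow> odd (card {x\<in>Sigma A J. (\<lambda>(a,j). \<psi> a j) x = z})"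
      unfolding e1 e2 by (rule par_count[OF assms(1)])
  qed
  show ?thesis using key by (simp only: red_def mem_Collect_eq set_eq_iff simp_thms)
qed

lemma parity_sum_mult:
  assumes "finite B"
  shows "odd (\<Sum>b\<in>B. c b * m b) \<longleftrightarrow> odd (\<Sum>b\<in>{b\<in>B. odd (c b)}. (m b::nat))"
  using assms
proof (induction B rule: finite_induct)
  case empty then show ?case by simp
next
  case (insert x F)
  show ?case
  proof (cases "odd (c x)")
    case True
    then have "{b\<in>insert x F. odd (c b)} = insert x {b\<in>F. odd (c b)}" by auto
    moreover have "x \<notin> {b\<in>F. odd (c b)}" using insert by auto
    ultimately show ?thesis using insert True by (simp add: odd_add even_mult_iff)
  next
    case False
    then have "{b\<in>insert x F. odd (c b)} = {b\<in>F. odd (c b)}" by auto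
    then show ?thesis using insert False by (simp add: odd_add even_mult_iff)
  qed
qed

lemma red_group:
  assumes "finite I" "\<And>b. finite (T b)"
  shows "red (Sigma (red I \<phi>) T) \<psi> = red (Sigma I (\<lambda>i. T (\<phi> i))) (\<lambda>(i,t). \<psi> (\<phi> i, t))"
proof -
  have key: "odd (card {x\<in>Sigma (red I \<phi>) T. \<psi> x = z}) \<longleftrightarrow> odd (card {x\<in>Sigma I (\<lambda>i. T (\<phi> i)). (\<lambda>(i,t). \<psi> (\<phi> i, t)) x = z})" for z
  proof -
    define m where "m b = card {t\<in>T b. \<psi> (b,t) = z}" for b
    have e1: "card {x\<in>Sigma (red I \<phi>) T. \<psi> x = z} = (\<Sum>b\<in>red I \<phi>. m b)"
      using card_Sigma_filter[OF finite_red[OF assms(1)] assms(2)] m_def by simp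
    have e2: "card {x\<in>Sigma I (\<lambda>i. T (\<phi> i)). (\<lambda>(i,t). \<psi> (\<phi> i, t)) x = z} = (\<Sum>i\<in>I. m (\<phi> i))"
      using card_Sigma_filter[OF assms(1) assms(2)] m_def by simp
    also have "\<dots> = (\<Sum>b\<in>\<phi> ` I. (\<Sum>i\<in>{i\<in>I. \<phi> i = b}. m (\<phi> i)))"
      using sum.image_gen[OF assms(1)] by blast
    also have "\<dots> = (\<Sum>b\<in>\<phi> ` I. card {i\<in>I. \<phi> i = b} * m b)"
      by (intro sum.cong refl) simp
    finally have e2': "card {x\<in>Sigma I (\<lambda>i. T (\<phi> i)). (\<lambda>(i,t). \<psi> (\<phi> i, t)) x = z} = (\<Sum>b\<in>\<phi> ` I. card {i\<in>I. \<phi> i = b} * m b)" .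
    have "{b\<in>\<phi> ` I. odd (card {i\<in>I. \<phi> i = b})} = red I \<phi>"
      using red_subset[of I \<phi>] by (auto simp: red_def)
    then show ?thesis unfolding e1 e2' using parity_sum_mult[of "\<phi> ` I" "\<lambda>b. card {i\<in>I. \<phi> i = b}" m] assms(1) by simp
  qed
  show ?thesis using key by (simp only: red_def mem_Collect_eq set_eq_iff simp_thms)
qed

lemma red_union:
  assumes "finite I" "finite J" "I \<inter> J = {}"
  shows "red (I \<union> J) \<phi> = symd (red I \<phi>) (red J \<phi>)"
proof -
  have "card {i\<in>I \<union> J. \<phi> i = z} = card {i\<in>I. \<phi> i = z} + card {i\<in>J. \<phi> i = z}" for z
  proof -
    have "{i\<in>I \<union> J. \<phi> i = z} = {i\<in>I. \<phi> i = z} \<union> {i\<in>J. \<phi> i = z}" by auto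
    then show ?thesis using assms by (simp add: card_Un_disjoint disjoint_iff)
  qed
  then show ?thesis by (auto simp: red_def symd_def)
qed

lemma red_cong:
  assumes "I = J" "\<And>i. i \<in> J \<Longrightarrow> \<phi> i = \<psi> i"
  shows "red I \<phi> = red J \<psi>"
proof -
  have "{i\<in>I. \<phi> i = z} = {i\<in>J. \<psi> i = z}" for z using assms by auto
  then show ?thesis by (simp add: red_def)
qed

lemma red_bij:
  assumes "bij_betw e I J"
  shows "red J \<phi> = red I (\<phi> \<circ> e)"
proof -
  have "card {j\<in>J. \<phi> j = z} = card {i\<in>I. \<phi> (e i) = z}" for z
  proof -
    have "bij_betw e {i\<in>I. \<phi> (e i) = z} {j\<in>J. \<phi> j = z}"
      using assms unfolding bij_betw_def inj_on_def by auto
    then show ?thesis by (simp add: bij_betw_same_card)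
  qed
  then show ?thesis by (simp add: red_def)
qed

lemma red_empty[simp]: "red {} \<phi> = {}"
  by (simp add: red_def)

lemma red_card_parity:
  assumes "finite I"
  shows "odd (card (red I \<phi>)) \<longleftrightarrow> odd (card I)"
proof -
  have "sum (\<lambda>_. 1::nat) I = (\<Sum>b\<in>\<phi> ` I. sum (\<lambda>_. 1::nat) {i\<in>I. \<phi> i = b})"
    by (rule sum.image_gen[OF assms])
  then have c: "card I = (\<Sum>b\<in>\<phi> ` I. card {i\<in>I. \<phi> i = b})"
    by (metis (no_types, lifting) card_eq_sum sum.cong)
  have r: "red I \<phi> = {b\<in>\<phi> ` I. odd (card {i\<in>I. \<phi> i = b})}"
    using red_subset[of I \<phi>] by (auto simp: red_def)
  show ?thesis unfolding r c by (rule par_count) (use assms in simp)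
qed

lemma even_card_invol:
  assumes "finite S" "\<And>x. x \<in> S \<Longrightarrow> \<iota> x \<in> S" "\<And>x. x \<in> S \<Longrightarrow> \<iota> (\<iota> x) = x" "\<And>x. x \<in> S \<Longrightarrow> \<iota> x \<noteq> x"
  shows "even (card S)"
  using assms
proof (induction "card S" arbitrary: S rule: less_induct)
  case less
  show ?case
  proof (cases "S = {}")
    case True then show ?thesis by simp
  next
    case False
    then obtain x where x: "x \<in> S" by blast
    define S' where "S' = S - {x, \<iota> x}"
    have "\<iota> x \<in> S" "\<iota> x \<noteq> x" using less(3) less(5) x by auto
    moreover have "card {x, \<iota> x} \<le> card S" using less(2) x \<open>\<iota> x \<in> S\<close> by (intro card_mono) auto
    ultimately have cS: "card S = card S' + 2" using less(2) x unfolding S'_def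
      by (simp add: card_Diff_subset)
    have "even (card S')"
    proof (rule less(1))
      show "card S' < card S" using cS by simp
      show "finite S'" using less(2) S'_def by simp
      show "\<iota> y \<in> S'" if "y \<in> S'" for y
      proof -
        have y: "y \<in> S" "y \<noteq> x" "y \<noteq> \<iota> x" using that S'_def by auto
        have "\<iota> (\<iota> y) = y" "\<iota> (\<iota> x) = x" using less(4) y x by auto
        then have "\<iota> y \<noteq> x" "\<iota> y \<noteq> \<iota> x" using y by metis+
        then show ?thesis using less(3) y S'_def by auto
      qed
      show "\<iota> (\<iota> y) = y" if "y \<in> S'" for y using that less(4) S'_def by auto
      show "\<iota> y \<noteq> y" if "y \<in> S'" for y using that less(5) S'_def by auto
    qed
    then show ?thesis using cS by simp
  qed
qed

lemma red_invol:
  assumes "finite I" "\<And>x. x \<in> I \<Longrightarrow> \<iota> x \<in> I" "\<And>x. x \<in> I \<Longrightarrow> \<iota> (\<iota> x) = x" "\<And>x. x \<in> I \<Longrightarrow> \<iota> x \<noteq> x"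
    "\<And>x. x \<in> I \<Longrightarrow> \<phi> (\<iota> x) = \<phi> x"
  shows "red I \<phi> = {}"
proof -
  have "even (card {i\<in>I. \<phi> i = z})" for z
    by (rule even_card_invol[where \<iota>=\<iota>]) (use assms in auto)
  then show ?thesis by (auto simp: red_def)
qed

lemma red_inj_image:
  assumes "inj_on m (\<phi> ` I)"
  shows "red I (m \<circ> \<phi>) = m ` red I \<phi>"
proof -
  have key: "{j\<in>I. m (\<phi> j) = m (\<phi> i)} = {j\<in>I. \<phi> j = \<phi> i}" if i: "i \<in> I" for i
  proof -
    have "\<phi> j = \<phi> i" if "j \<in> I" "m (\<phi> j) = m (\<phi> i)" for j
      using inj_onD[OF assms that(2)] that(1) i by blast
    then show ?thesis by auto
  qed
  show ?thesis
  proof (intro equalityI subsetI)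
      fix w
      assume w: "w \<in> red I (m \<circ> \<phi>)"
      have "w \<in> (m \<circ> \<phi>) ` I" using red_subset[of I "m \<circ> \<phi>"] w by (rule subsetD)
      then obtain i where i: "i \<in> I" "m (\<phi> i) = w" by (metis comp_apply imageE)
      then have "odd (card {j\<in>I. \<phi> j = \<phi> i})" using key[OF i(1)] w by (simp add: red_def)
      then have "\<phi> i \<in> red I \<phi>" by (simp add: red_def)
      then show "w \<in> m ` red I \<phi>" using i by blast
    next
      fix w
      assume "w \<in> m ` red I \<phi>"
      then obtain z where z: "z \<in> red I \<phi>" "w = m z" by auto
      have "z \<in> \<phi> ` I" using red_subset[of I \<phi>] z(1) by (rule subsetD)
      then obtain i where i: "i \<in> I" "\<phi> i = z" by (metis imageE)
      have "odd (card {j\<in>I. \<phi> j = \<phi> i})" using z i by (simp add: red_def)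
      then have "odd (card {j\<in>I. m (\<phi> j) = m (\<phi> i)})" using key[OF i(1)] by simp
      then show "w \<in> red I (m \<circ> \<phi>)" using z i by (simp add: red_def)
  qed
qed


lemma symd_cancel: "symd (symd X Y) (symd Z Y) = symd X Z"
  by (auto simp: symd_def)

lemma red_Sigma_symd:
  assumes "finite A" "finite B" "\<And>a. finite (T a)"
  shows "red (Sigma (symd A B) T) \<psi> = symd (red (Sigma A T) \<psi>) (red (Sigma B T) \<psi>)"
proof -
  have fin: "\<And>X. finite X \<Longrightarrow> finite (Sigma X T)" using assms(3) by auto
  have e1: "Sigma (symd A B) T = Sigma (A - B) T \<union> Sigma (B - A) T" by (auto simp: symd_def)
  have e2: "Sigma A T = Sigma (A - B) T \<union> Sigma (A \<inter> B) T" by auto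
  have e3: "Sigma B T = Sigma (B - A) T \<union> Sigma (A \<inter> B) T" by auto
  have r1: "red (Sigma (symd A B) T) \<psi> = symd (red (Sigma (A - B) T) \<psi>) (red (Sigma (B - A) T) \<psi>)"
    unfolding e1 by (rule red_union) (use assms fin in auto)
  have r2: "red (Sigma A T) \<psi> = symd (red (Sigma (A - B) T) \<psi>) (red (Sigma (A \<inter> B) T) \<psi>)"
    unfolding e2 by (rule red_union) (use assms fin in auto)
  have r3: "red (Sigma B T) \<psi> = symd (red (Sigma (B - A) T) \<psi>) (red (Sigma (A \<inter> B) T) \<psi>)"
    unfolding e3 by (rule red_union) (use assms fin in auto)
  show ?thesis by (simp only: r1 r2 r3 symd_cancel)
qed

lemma red_singleton_id:
  assumes "finite C"
  shows "red (Sigma {x} (\<lambda>_. C)) snd = C"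
proof -
  have "{i\<in>Sigma {x} (\<lambda>_. C). snd i = z} = (if z \<in> C then {(x,z)} else {})" for z by auto
  then show ?thesis by (auto simp: red_def)
qed

lemma red_id:
  assumes "finite C"
  shows "red C id = C"
proof -
  have "{i\<in>C. id i = z} = (if z \<in> C then {z} else {})" for z by auto
  then show ?thesis by (auto simp: red_def)
qed

lemma zmap_empty:
  assumes "zchain_map cells bd X \<gamma>"
  shows "\<gamma> p {} = {}"
proof -
  have L: "\<forall>p A B. A \<subseteq> cells p \<longrightarrow> B \<subseteq> cells p \<longrightarrow> \<gamma> p (symd A B) = symd (\<gamma> p A) (\<gamma> p B)"
    using assms(1) unfolding zchain_map_def by (rule conjunct1)
  have "\<gamma> p (symd {} {}) = symd (\<gamma> p {}) (\<gamma> p {})" using L by simp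
  then show ?thesis by (simp add: symd_def)
qed

lemma zmap_expand:
  assumes "zchain_map cells bd X \<gamma>" "finite A" "A \<subseteq> cells p"
  shows "\<gamma> p A = red (Sigma A (\<lambda>\<sigma>. \<gamma> p {\<sigma>})) snd"
  using assms(2,3)
proof (induction A rule: finite_induct)
  case empty then show ?case using zmap_empty[OF assms(1)] by simp
next
  case (insert x F)
  have L: "\<forall>p A B. A \<subseteq> cells p \<longrightarrow> B \<subseteq> cells p \<longrightarrow> \<gamma> p (symd A B) = symd (\<gamma> p A) (\<gamma> p B)"
    using assms(1) unfolding zchain_map_def by (rule conjunct1)
  have Z: "\<forall>p A. A \<subseteq> cells p \<longrightarrow> zchain p X (\<gamma> p A)"
    using assms(1) unfolding zchain_map_def by blast
  have lin: "\<gamma> p (symd {x} F) = symd (\<gamma> p {x}) (\<gamma> p F)"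
    using L insert(4) by simp
  have "symd {x} F = insert x F" using insert(2) by (auto simp: symd_def)
  then have l2: "\<gamma> p (insert x F) = symd (\<gamma> p {x}) (\<gamma> p F)" using lin by simp
  have fin: "finite (\<gamma> p {\<sigma>})" if "\<sigma> \<in> insert x F" for \<sigma>
    using Z insert(4) that unfolding zchain_def by blast
  have "Sigma (insert x F) (\<lambda>\<sigma>. \<gamma> p {\<sigma>}) = Sigma {x} (\<lambda>_. \<gamma> p {x}) \<union> Sigma F (\<lambda>\<sigma>. \<gamma> p {\<sigma>})" by auto
  then have "red (Sigma (insert x F) (\<lambda>\<sigma>. \<gamma> p {\<sigma>})) snd = symd (red (Sigma {x} (\<lambda>_. \<gamma> p {x})) snd) (red (Sigma F (\<lambda>\<sigma>. \<gamma> p {\<sigma>})) snd)"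
    using red_union[of "Sigma {x} (\<lambda>_. \<gamma> p {x})" "Sigma F (\<lambda>\<sigma>. \<gamma> p {\<sigma>})" snd] insert fin by auto
  also have "\<dots> = symd (\<gamma> p {x}) (\<gamma> p F)"
    using red_singleton_id[of "\<gamma> p {x}" x] fin insert by auto
  finally show ?case using l2 by simp
qed

lemma sbd_red:
  assumes "finite c" "p > 0"
  shows "sbd p c = red (c \<times> {..p}) (\<lambda>(f,k). singular_face p k f)"
proof -
  have "{(f, k). f \<in> c \<and> k \<le> p \<and> singular_face p k f = g} = {x\<in>c \<times> {..p}. (\<lambda>(f,k). singular_face p k f) x = g}" for g
    by auto
  then show ?thesis using assms by (simp add: sbd_def red_def)
qed


definition pth :: "nat \<Rightarrow> nat \<Rightarrow> (nat \<Rightarrow> nat) set" where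
  "pth p q = {a. a 0 = 0 \<and> a (p+q) = p \<and> (\<forall>i<p+q. a (Suc i) = a i \<or> a (Suc i) = Suc (a i)) \<and> (\<forall>i>p+q. a i = 0)}"

lemma pthD:
  assumes "a \<in> pth p q"
  shows "a 0 = 0" "a (p+q) = p" "\<And>i. i < p+q \<Longrightarrow> a (Suc i) = a i \<or> a (Suc i) = Suc (a i)" "\<And>i. i > p+q \<Longrightarrow> a i = 0"
  using assms by (auto simp: pth_def)

lemma pth_mono_aux:
  assumes "a \<in> pth p q" "j \<le> p+q"
  shows "i \<le> j \<Longrightarrow> a i \<le> a j \<and> a j \<le> a i + (j - i)"
  using assms(2)
proof (induction j)
  case 0 then show ?case by simp
next
  case (Suc j)
  show ?case
  proof (cases "i = Suc j")
    case True then show ?thesis by simp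
  next
    case False
    then have "i \<le> j" using Suc by simp
    then have ih: "a i \<le> a j \<and> a j \<le> a i + (j - i)" using Suc by simp
    have "a (Suc j) = a j \<or> a (Suc j) = Suc (a j)" using pthD(3)[OF assms(1)] Suc by simp
    then show ?thesis using ih \<open>i \<le> j\<close> by auto
  qed
qed

lemma pth_mono: "a \<in> pth p q \<Longrightarrow> i \<le> j \<Longrightarrow> j \<le> p+q \<Longrightarrow> a i \<le> a j"
  using pth_mono_aux by blast

lemma pth_lip: "a \<in> pth p q \<Longrightarrow> i \<le> j \<Longrightarrow> j \<le> p+q \<Longrightarrow> a j \<le> a i + (j - i)"
  using pth_mono_aux by blast

lemma pth_le_idx: "a \<in> pth p q \<Longrightarrow> i \<le> p+q \<Longrightarrow> a i \<le> i"
  using pth_lip[of a p q 0 i] pthD(1)[of a p q] by simp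

lemma pth_le_p: "a \<in> pth p q \<Longrightarrow> a i \<le> p"
  by (metis le0 linorder_not_le order.refl pthD(2,4) pth_mono)

lemma pth_b_le: "a \<in> pth p q \<Longrightarrow> i \<le> p+q \<Longrightarrow> i - a i \<le> q"
  using pth_lip[of a p q i "p+q"] pthD(2)[of a p q] by simp

lemma finite_pth: "finite (pth p q)"
proof -
  let ?n = "p+q"
  let ?m = "\<lambda>a. map a [0..<Suc ?n]"
  have "inj_on ?m (pth p q)"
  proof (rule inj_onI)
    fix a b assume a: "a \<in> pth p q" and b: "b \<in> pth p q" and e: "?m a = ?m b"
    show "a = b"
    proof
      fix i show "a i = b i"
      proof (cases "i \<le> ?n")
        case True
        have "a i = ?m a ! i" "b i = ?m b ! i" using True by (simp_all only: nth_map_upt) auto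
        then show ?thesis by (simp only: e)
      next
        case False then show ?thesis using pthD(4)[OF a] pthD(4)[OF b] by simp
      qed
    qed
  qed
  moreover have "?m ` pth p q \<subseteq> {xs. set xs \<subseteq> {..p} \<and> length xs = Suc ?n}"
    using pth_le_p by fastforce
  moreover have "finite {xs. set xs \<subseteq> {..p} \<and> length xs = Suc ?n}"
    by (rule finite_lists_length_eq) simp
  ultimately show ?thesis by (meson finite_imageD finite_subset)
qed

definition tr :: "nat \<Rightarrow> (nat \<Rightarrow> nat) \<Rightarrow> nat \<Rightarrow> nat" where
  "tr n a = (\<lambda>i. if i \<le> n then i - a i else 0)"

lemma tr_pth:
  assumes "a \<in> pth p q"
  shows "tr (p+q) a \<in> pth q p"
proof -
  have "tr (p+q) a 0 = 0" by (simp add: tr_def)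
  moreover have "tr (p+q) a (q+p) = q" using pthD(2)[OF assms] by (simp add: tr_def add.commute)
  moreover have "tr (p+q) a (Suc i) = tr (p+q) a i \<or> tr (p+q) a (Suc i) = Suc (tr (p+q) a i)" if "i < q+p" for i
  proof -
    have "a i \<le> i" "a (Suc i) \<le> Suc i" using pth_le_idx[OF assms] that by auto
    moreover have "a (Suc i) = a i \<or> a (Suc i) = Suc (a i)" using pthD(3)[OF assms] that by simp
    ultimately show ?thesis using that by (auto simp: tr_def)
  qed
  moreover have "\<forall>i>q+p. tr (p+q) a i = 0" by (simp add: tr_def)
  ultimately show ?thesis by (simp add: pth_def add.commute)
qed

lemma tr_tr:
  assumes "a \<in> pth p q"
  shows "tr (p+q) (tr (p+q) a) = a"
proof
  fix i show "tr (p+q) (tr (p+q) a) i = a i"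
    using pth_le_idx[OF assms, of i] pthD(4)[OF assms, of i] by (auto simp: tr_def)
qed

lemma bij_tr: "bij_betw (tr (p+q)) (pth p q) (pth q p)"
proof (rule bij_betw_byWitness[where f'="tr (p+q)"])
  show "\<forall>a\<in>pth p q. tr (p+q) (tr (p+q) a) = a" using tr_tr by blast
  show "\<forall>a\<in>pth q p. tr (p+q) (tr (p+q) a) = a" using tr_tr[of _ q p] by (simp add: add.commute)
  show "tr (p+q) ` pth p q \<subseteq> pth q p" using tr_pth by blast
  show "tr (p+q) ` pth q p \<subseteq> pth p q" using tr_pth[of _ q p] by (auto simp: add.commute)
qed

definition aU :: "nat \<Rightarrow> (nat \<Rightarrow> nat) \<Rightarrow> nat \<Rightarrow> bool" where
  "aU n a k \<longleftrightarrow> k \<le> n \<and> (k = 0 \<or> a k = Suc (a (k - 1))) \<and> (k = n \<or> a (Suc k) = Suc (a k))"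

definition bU :: "nat \<Rightarrow> (nat \<Rightarrow> nat) \<Rightarrow> nat \<Rightarrow> bool" where
  "bU n a k \<longleftrightarrow> k \<le> n \<and> (k = 0 \<or> a k = a (k - 1)) \<and> (k = n \<or> a (Suc k) = a k)"

definition sk :: "nat \<Rightarrow> nat \<Rightarrow> nat" where
  "sk k i = (if i < k then i else Suc i)"

definition shift :: "nat \<Rightarrow> nat \<Rightarrow> nat" where
  "shift j m = (if m < j then m else Suc m)"

definition del :: "nat \<Rightarrow> nat \<Rightarrow> (nat \<Rightarrow> nat) \<Rightarrow> nat \<Rightarrow> nat" where
  "del n k a = (\<lambda>i. if i < k then a i else if i < n then a (Suc i) - 1 else 0)"

definition kk :: "nat \<Rightarrow> nat \<Rightarrow> (nat \<Rightarrow> nat) \<Rightarrow> nat" where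
  "kk n j a = (LEAST k. k = n \<or> j \<le> a k)"

definition ins :: "nat \<Rightarrow> nat \<Rightarrow> (nat \<Rightarrow> nat) \<Rightarrow> nat \<Rightarrow> nat" where
  "ins n j a = (\<lambda>i. if i < kk n j a then a i else if i = kk n j a then j else if i \<le> n then Suc (a (i - 1)) else 0)"

lemma pth_step: "a \<in> pth p q \<Longrightarrow> i < p+q \<Longrightarrow> a i \<le> a (Suc i) \<and> a (Suc i) \<le> Suc (a i)"
  using pthD(3) by fastforce

lemma aU_lt:
  assumes "a \<in> pth p q" "aU (p+q) a k" "i < k"
  shows "a i < a k"
proof -
  have "a i \<le> a (k - 1)" using pth_mono[OF assms(1), of i "k - 1"] assms aU_def by auto
  moreover have "a k = Suc (a (k - 1))" using assms(2,3) aU_def by auto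
  ultimately show ?thesis by simp
qed

lemma aU_gt:
  assumes "a \<in> pth p q" "aU (p+q) a k" "k < i" "i \<le> p+q"
  shows "a k < a i"
proof -
  have "a (Suc k) \<le> a i" using pth_mono[OF assms(1), of "Suc k" i] assms by auto
  moreover have "a (Suc k) = Suc (a k)" using assms aU_def by auto
  ultimately show ?thesis by simp
qed

lemma aU_p:
  assumes "a \<in> pth p q" "aU (p+q) a k" "p + q \<ge> 1"
  shows "p \<ge> 1"
proof (cases "k = 0")
  case True
  then have "a 1 = 1" using assms pthD(1)[OF assms(1)] aU_def by auto
  then show ?thesis using pth_le_p[OF assms(1), of 1] by simp
next
  case False
  then have "a k \<ge> 1" using assms aU_def by auto
  then show ?thesis using pth_le_p[OF assms(1), of k] by simp
qed

lemma del_pth: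
  assumes "a \<in> pth p q" "aU (p+q) a k" "p \<ge> 1"
  shows "del (p+q) k a \<in> pth (p - 1) q"
proof -
  let ?n = "p+q"
  let ?d = "del ?n k a"
  have k: "k \<le> ?n" using assms aU_def by auto
  have a0: "a 0 = 0" and an: "a ?n = p" using pthD[OF assms(1)] by auto
  have "?d 0 = 0"
  proof (cases "k = 0")
    case True
    then have "a 1 = 1" using assms a0 aU_def by auto
    then show ?thesis using True assms(3) by (simp add: del_def)
  next
    case False then show ?thesis using a0 by (simp add: del_def)
  qed
  moreover have "?d (p - 1 + q) = p - 1"
  proof (cases "k = ?n")
    case True
    then have "a ?n = Suc (a (?n - 1))" using assms aU_def by auto
    then show ?thesis using True an assms(3) by (simp add: del_def)
  next
    case False
    then have "?n - 1 \<ge> k" using k by simp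
    then show ?thesis using an assms(3) by (simp add: del_def)
  qed
  moreover have "?d (Suc i) = ?d i \<or> ?d (Suc i) = Suc (?d i)" if "i < p - 1 + q" for i
  proof -
    consider "Suc i < k" | "Suc i = k" | "i \<ge> k" by linarith
    then show ?thesis
    proof cases
      case 1 then show ?thesis using pthD(3)[OF assms(1), of i] that by (simp add: del_def)
    next
      case 2
      then have "a (Suc k) = Suc (a k)" "a k = Suc (a i)" using assms aU_def that by auto
      then show ?thesis using 2 that assms(3) by (auto simp: del_def)
    next
      case 3
      have "Suc i \<le> p + q" using that by simp
      then have "a k < a (Suc i)" using aU_gt[OF assms(1,2), of "Suc i"] 3 by simp
      then have "a (Suc i) \<ge> 1" by simp
      then show ?thesis using pthD(3)[OF assms(1), of "Suc i"] that 3 assms(3) by (auto simp: del_def)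
    qed
  qed
  moreover have "\<forall>i>p - 1 + q. ?d i = 0" using k assms(3) by (auto simp: del_def)
  ultimately show ?thesis by (simp add: pth_def)
qed

lemma del_rel:
  assumes "a \<in> pth p q" "aU (p+q) a k" "i < p+q"
  shows "a (sk k i) = shift (a k) (del (p+q) k a i)" "sk k i - a (sk k i) = i - del (p+q) k a i"
proof -
  have k: "k \<le> p+q" using assms aU_def by auto
  show "a (sk k i) = shift (a k) (del (p+q) k a i)"
  proof (cases "i < k")
    case True then show ?thesis using aU_lt[OF assms(1,2) True] by (simp add: sk_def shift_def del_def)
  next
    case False
    then have "a k < a (Suc i)" using aU_gt[OF assms(1,2), of "Suc i"] assms(3) by simp
    then show ?thesis using False assms(3) by (simp add: sk_def shift_def del_def)
  qed
  show "sk k i - a (sk k i) = i - del (p+q) k a i"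
  proof (cases "i < k")
    case True then show ?thesis by (simp add: sk_def del_def)
  next
    case False
    then have "a k < a (Suc i)" using aU_gt[OF assms(1,2), of "Suc i"] assms(3) by simp
    moreover have "a (Suc i) \<le> Suc i" using pth_le_idx[OF assms(1), of "Suc i"] assms(3) by simp
    ultimately show ?thesis using False assms(3) by (simp add: sk_def del_def)
  qed
qed

lemma kk_props:
  assumes b: "b \<in> pth (p - 1) q" and p: "p \<ge> 1" and j: "j \<le> p"
  defines "K \<equiv> kk (p+q) j b"
  shows "K \<le> p+q" "\<And>i. i < K \<Longrightarrow> b i < j \<and> i < p+q"
    "K < p+q \<Longrightarrow> b K = j" "K = p+q \<Longrightarrow> j = p" "K > 0 \<Longrightarrow> b (K - 1) = j - 1 \<and> j \<ge> 1"
proof -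
  let ?n = "p+q"
  have nn: "p - 1 + q = ?n - 1" using p by simp
  have ex: "K = ?n \<or> j \<le> b K" unfolding K_def kk_def by (rule LeastI[of _ ?n]) simp
  show K1: "K \<le> ?n" unfolding K_def kk_def by (rule Least_le) simp
  show K2: "b i < j \<and> i < ?n" if "i < K" for i
  proof -
    have "\<not> (i = ?n \<or> j \<le> b i)" using not_less_Least[of i "\<lambda>k. k = ?n \<or> j \<le> b k"] that unfolding K_def kk_def by blast
    then show ?thesis using K1 that by auto
  qed
  show K3: "b K = j" if "K < ?n"
  proof -
    have "j \<le> b K" using ex that by simp
    moreover have "b K \<le> j"
    proof (cases "K = 0")
      case True then show ?thesis using pthD(1)[OF b] by simp
    next
      case False
      then have "b (K - 1) < j" using K2[of "K - 1"] by simp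
      moreover have "b K \<le> Suc (b (K - 1))" using pth_step[OF b, of "K - 1"] False that nn by simp
      ultimately show ?thesis by simp
    qed
    ultimately show ?thesis by simp
  qed
  show K4: "j = p" if "K = ?n"
  proof -
    have "?n \<ge> 1" using p by simp
    then have "b (?n - 1) < j" using K2[of "?n - 1"] that by simp
    moreover have "b (?n - 1) = p - 1" using pthD(2)[OF b] nn by simp
    ultimately show ?thesis using j by simp
  qed
  show "b (K - 1) = j - 1 \<and> j \<ge> 1" if "K > 0"
  proof -
    have lt: "b (K - 1) < j" using K2[of "K - 1"] that by simp
    show ?thesis
    proof (cases "K < ?n")
      case True
      then have "b K = j" using K3 by simp
      moreover have "b K \<le> Suc (b (K - 1))" using pth_step[OF b, of "K - 1"] that True nn by simp
      ultimately show ?thesis using lt by simp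
    next
      case False
      then have "K = ?n" using K1 by simp
      then have "j = p" using K4 by simp
      moreover have "b (?n - 1) = p - 1" using pthD(2)[OF b] nn by simp
      ultimately show ?thesis using \<open>K = ?n\<close> p by simp
    qed
  qed
qed

lemma ins_props:
  assumes b: "b \<in> pth (p - 1) q" and p: "p \<ge> 1" and j: "j \<le> p"
  shows "ins (p+q) j b \<in> pth p q" "aU (p+q) (ins (p+q) j b) (kk (p+q) j b)"
    "del (p+q) (kk (p+q) j b) (ins (p+q) j b) = b" "ins (p+q) j b (kk (p+q) j b) = j"
proof -
  let ?n = "p+q"
  let ?K = "kk ?n j b"
  let ?a = "ins ?n j b"
  note K = kk_props[OF b p j]
  have nn: "p - 1 + q = ?n - 1" using p by simp
  have b0: "b 0 = 0" and bn: "b (?n - 1) = p - 1" using pthD(1,2)[OF b] nn by auto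
  have bz: "\<And>i. i \<ge> ?n \<Longrightarrow> b i = 0" using pthD(4)[OF b] nn p by simp
  have bs: "\<And>i. i < ?n - 1 \<Longrightarrow> b i \<le> b (Suc i) \<and> b (Suc i) \<le> Suc (b i)" using pth_step[OF b] nn by simp
  show "?a (kk ?n j b) = j" by (simp add: ins_def)
  have "?a 0 = 0"
  proof (cases "?K = 0")
    case True
    then have "j = 0" using K(3) b0 p by (cases "?K < ?n") auto
    then show ?thesis using True by (simp add: ins_def)
  next
    case False then show ?thesis using b0 by (simp add: ins_def)
  qed
  moreover have "?a ?n = p"
  proof (cases "?K = ?n")
    case True then show ?thesis using K(4) by (simp add: ins_def)
  next
    case False
    then have "?K < ?n" using K(1) by simp
    then show ?thesis using bn p by (simp add: ins_def)
  qed
  moreover have "?a (Suc i) = ?a i \<or> ?a (Suc i) = Suc (?a i)" if "i < ?n" for i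
  proof -
    consider "Suc i < ?K" | "Suc i = ?K" | "i = ?K" | "i > ?K" by linarith
    then show ?thesis
    proof cases
      case 1
      then have "i < ?n - 1" using K(2)[of "Suc i"] by auto
      then have "b (Suc i) = b i \<or> b (Suc i) = Suc (b i)" using pthD(3)[OF b, of i] nn by simp
      then show ?thesis using 1 by (simp add: ins_def)
    next
      case 2
      then have "b i = j - 1" "j \<ge> 1" using K(5)[of] by (metis diff_Suc_1 zero_less_Suc)+
      then show ?thesis using 2 by (simp add: ins_def)
    next
      case 3 then show ?thesis using K(3) that by (simp add: ins_def)
    next
      case 4
      then have "i - 1 < ?n - 1" "Suc (i - 1) = i" using that by auto
      then show ?thesis using 4 pthD(3)[OF b, of "i - 1"] that nn by (auto simp: ins_def)
    qed
  qed
  moreover have "\<forall>i>?n. ?a i = 0" using K(1) by (simp add: ins_def)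
  ultimately show "?a \<in> pth p q" by (simp add: pth_def)
  show "aU ?n ?a ?K"
  proof -
    have "?K = 0 \<or> ?a ?K = Suc (?a (?K - 1))" using K(5) by (auto simp: ins_def)
    moreover have "?K = ?n \<or> ?a (Suc ?K) = Suc (?a ?K)"
    proof (cases "?K < ?n")
      case True then show ?thesis using K(3) by (simp add: ins_def)
    qed (use K(1) in simp)
    ultimately show ?thesis using K(1) by (simp add: aU_def)
  qed
  show "del ?n ?K ?a = b"
  proof
    fix i show "del ?n ?K ?a i = b i"
    proof (cases "i < ?K")
      case True then show ?thesis by (simp add: del_def ins_def)
    next
      case False
      show ?thesis
      proof (cases "i < ?n")
        case True then show ?thesis using False by (simp add: del_def ins_def)
      next
        case False2: False
        then show ?thesis using False bz by (simp add: del_def ins_def)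
      qed
    qed
  qed
qed

lemma kk_del:
  assumes "a \<in> pth p q" "aU (p+q) a k"
  shows "kk (p+q) (a k) (del (p+q) k a) = k"
  unfolding kk_def
proof (rule Least_equality)
  have k: "k \<le> p+q" using assms aU_def by auto
  show "k = p+q \<or> a k \<le> del (p+q) k a k"
  proof (cases "k < p+q")
    case True
    then have "a (Suc k) = Suc (a k)" using assms aU_def by auto
    then show ?thesis using True by (simp add: del_def)
  qed (use k in simp)
  fix y assume y: "y = p+q \<or> a k \<le> del (p+q) k a y"
  show "k \<le> y"
  proof (rule ccontr)
    assume "\<not> k \<le> y"
    then have "y < k" by simp
    then have "del (p+q) k a y = a y" by (simp add: del_def)
    moreover have "a y < a k" using aU_lt[OF assms \<open>y < k\<close>] .
    ultimately show False using y k \<open>y < k\<close> by auto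
  qed
qed

lemma ins_del:
  assumes "a \<in> pth p q" "aU (p+q) a k"
  shows "ins (p+q) (a k) (del (p+q) k a) = a"
proof
  fix i
  have k: "k \<le> p+q" using assms aU_def by auto
  have K: "kk (p+q) (a k) (del (p+q) k a) = k" by (rule kk_del[OF assms])
  show "ins (p+q) (a k) (del (p+q) k a) i = a i"
  proof -
    consider "i < k" | "i = k" | "k < i" "i \<le> p+q" | "i > p+q" by linarith
    then show ?thesis
    proof cases
      case 3
      then have "a k < a i" using aU_gt[OF assms] by simp
      moreover have "Suc (i - 1) = i" "\<not> (i - 1 < k)" "i - 1 < p+q" "\<not> i < k" "i \<noteq> k" using 3 by auto
      ultimately show ?thesis using 3 K by (simp add: ins_def del_def)
    next
      case 4 then show ?thesis using K k pthD(4)[OF assms(1)] by (simp add: ins_def)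
    qed (use K in \<open>simp_all add: ins_def del_def\<close>)
  qed
qed

lemma bij_del:
  assumes "p \<ge> 1"
  shows "bij_betw (\<lambda>(a,k). (a k, del (p+q) k a)) {(a,k). a \<in> pth p q \<and> aU (p+q) a k} {(j,b). j \<le> p \<and> b \<in> pth (p - 1) q}"
proof (rule bij_betw_byWitness[where f'="\<lambda>(j,b). (ins (p+q) j b, kk (p+q) j b)"])
  show "\<forall>x\<in>{(a,k). a \<in> pth p q \<and> aU (p+q) a k}. (\<lambda>(j,b). (ins (p+q) j b, kk (p+q) j b)) ((\<lambda>(a,k). (a k, del (p+q) k a)) x) = x"
    using ins_del kk_del by auto
  show "\<forall>y\<in>{(j,b). j \<le> p \<and> b \<in> pth (p - 1) q}. (\<lambda>(a,k). (a k, del (p+q) k a)) ((\<lambda>(j,b). (ins (p+q) j b, kk (p+q) j b)) y) = y"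
    using ins_props[OF _ assms] by auto
  show "(\<lambda>(a,k). (a k, del (p+q) k a)) ` {(a,k). a \<in> pth p q \<and> aU (p+q) a k} \<subseteq> {(j,b). j \<le> p \<and> b \<in> pth (p - 1) q}"
    using del_pth[OF _ _ assms] pth_le_p by auto
  show "(\<lambda>(j,b). (ins (p+q) j b, kk (p+q) j b)) ` {(j,b). j \<le> p \<and> b \<in> pth (p - 1) q} \<subseteq> {(a,k). a \<in> pth p q \<and> aU (p+q) a k}"
    using ins_props[OF _ assms] by auto
qed

lemma aU_bU_disj:
  assumes "a \<in> pth p q" "p + q \<ge> 1"
  shows "\<not> (aU (p+q) a k \<and> bU (p+q) a k)"
proof
  assume h: "aU (p+q) a k \<and> bU (p+q) a k"
  show False
  proof (cases "k = 0")
    case True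
    then show False using h assms pthD(1)[OF assms(1)] unfolding aU_def bU_def by auto
  next
    case False
    then show False using h unfolding aU_def bU_def by auto
  qed
qed

lemma bU_tr:
  assumes "a \<in> pth p q"
  shows "aU (p+q) (tr (p+q) a) k \<longleftrightarrow> bU (p+q) a k"
proof (cases "k \<le> p+q")
  case True
  have A: "(k = 0 \<or> tr (p+q) a k = Suc (tr (p+q) a (k - 1))) \<longleftrightarrow> (k = 0 \<or> a k = a (k - 1))"
  proof (cases "k = 0")
    case False
    have "a (k - 1) \<le> a k \<and> a k \<le> Suc (a (k - 1))" using pth_step[OF assms, of "k - 1"] False True by simp
    moreover have "a k \<le> k" "a (k - 1) \<le> k - 1" using pth_le_idx[OF assms] True by auto
    ultimately show ?thesis using False True by (auto simp: tr_def)
  qed simp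
  have B: "(k = p+q \<or> tr (p+q) a (Suc k) = Suc (tr (p+q) a k)) \<longleftrightarrow> (k = p+q \<or> a (Suc k) = a k)"
  proof (cases "k = p+q")
    case False
    then have kl: "k < p+q" using True by simp
    have "a k \<le> a (Suc k) \<and> a (Suc k) \<le> Suc (a k)" using pth_step[OF assms, of k] kl by simp
    moreover have "a k \<le> k" "a (Suc k) \<le> Suc k" using pth_le_idx[OF assms] kl by auto
    ultimately show ?thesis using False kl by (auto simp: tr_def)
  qed simp
  show ?thesis using A B True unfolding aU_def bU_def by blast
qed (auto simp: aU_def bU_def)

definition flip :: "nat \<Rightarrow> (nat \<Rightarrow> nat) \<Rightarrow> nat \<Rightarrow> nat" where
  "flip k a = a(k := a (k - 1) + a (Suc k) - a k)"

lemma corner_shape: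
  assumes "a \<in> pth p q" "p + q \<ge> 1" "k \<le> p+q" "\<not> aU (p+q) a k" "\<not> bU (p+q) a k"
  shows "0 < k" "k < p+q" "(a k = Suc (a (k - 1)) \<and> a (Suc k) = a k) \<or> (a k = a (k - 1) \<and> a (Suc k) = Suc (a k))"
proof -
  show k0: "0 < k"
  proof (rule ccontr)
    assume "\<not> 0 < k"
    then have "k = 0" by simp
    have "0 < p + q" using assms(2) by linarith
    then have "a (Suc 0) = 0 \<or> a (Suc 0) = Suc 0" using pthD(3)[OF assms(1), of 0] pthD(1)[OF assms(1)] by simp
    then show False using assms(4,5) \<open>k = 0\<close> pthD(1)[OF assms(1)] unfolding aU_def bU_def by auto
  qed
  show kn: "k < p+q"
  proof (rule ccontr)
    assume "\<not> k < p+q"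
    then have "k = p+q" using assms(3) by simp
    then have "a k = a (k - 1) \<or> a k = Suc (a (k - 1))" using pthD(3)[OF assms(1), of "k - 1"] k0 by simp
    then show False using assms(4,5) \<open>k = p+q\<close> unfolding aU_def bU_def by auto
  qed
  have "a k = a (k - 1) \<or> a k = Suc (a (k - 1))" using pthD(3)[OF assms(1), of "k - 1"] k0 kn by simp
  moreover have "a (Suc k) = a k \<or> a (Suc k) = Suc (a k)" using pthD(3)[OF assms(1), of k] kn by simp
  ultimately show "(a k = Suc (a (k - 1)) \<and> a (Suc k) = a k) \<or> (a k = a (k - 1) \<and> a (Suc k) = Suc (a k))"
    using assms(4,5) k0 kn unfolding aU_def bU_def by auto
qed

lemma flip_props:
  assumes "a \<in> pth p q" "p + q \<ge> 1" "k \<le> p+q" "\<not> aU (p+q) a k" "\<not> bU (p+q) a k"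
  shows "flip k a \<in> pth p q" "\<not> aU (p+q) (flip k a) k" "\<not> bU (p+q) (flip k a) k"
    "flip k (flip k a) = a" "flip k a \<noteq> a" "\<And>i. i \<noteq> k \<Longrightarrow> flip k a i = a i"
proof -
  note C = corner_shape[OF assms]
  have km: "k - 1 \<noteq> k" "Suc k \<noteq> k" using C(1) by auto
  show fi: "\<And>i. i \<noteq> k \<Longrightarrow> flip k a i = a i" by (simp add: flip_def)
  have fk: "flip k a k = a (k - 1) + a (Suc k) - a k" by (simp add: flip_def)
  show "flip k a \<noteq> a" using C(3) fk by auto
  show "flip k (flip k a) = a" using C(3) km by (auto simp: flip_def fun_eq_iff)
  have sh: "(flip k a k = Suc (flip k a (k - 1)) \<and> flip k a (Suc k) = flip k a k) \<or> (flip k a k = flip k a (k - 1) \<and> flip k a (Suc k) = Suc (flip k a k))"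
    using C(3) fk fi[OF km(1)] fi[OF km(2)] by auto
  show "\<not> aU (p+q) (flip k a) k" using sh C(1,2) unfolding aU_def by auto
  show "\<not> bU (p+q) (flip k a) k" using sh C(1,2) unfolding bU_def by auto
  have "flip k a 0 = 0" "flip k a (p+q) = p" using pthD(1,2)[OF assms(1)] C(1,2) fi by auto
  moreover have "\<forall>i>p+q. flip k a i = 0" using pthD(4)[OF assms(1)] C(2) fi by auto
  moreover have "flip k a (Suc i) = flip k a i \<or> flip k a (Suc i) = Suc (flip k a i)" if "i < p+q" for i
  proof -
    consider "Suc i = k" | "i = k" | "Suc i \<noteq> k" "i \<noteq> k" by blast
    then show ?thesis
    proof cases
      case 1 then have "i = k - 1" by simp
      then show ?thesis using sh 1 by auto
    next
      case 2 then show ?thesis using sh by auto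
    next
      case 3 then show ?thesis using fi pthD(3)[OF assms(1) that] by simp
    qed
  qed
  ultimately show "flip k a \<in> pth p q" by (simp add: pth_def)
qed


definition bas :: "nat \<Rightarrow> nat \<Rightarrow> real" where
  "bas m = (\<lambda>i. if i = m then 1 else 0)"

definition La :: "(nat \<Rightarrow> nat) \<Rightarrow> nat \<Rightarrow> nat \<Rightarrow> real" where
  "La a = (\<lambda>i. bas (a i))"

definition Lb :: "(nat \<Rightarrow> nat) \<Rightarrow> nat \<Rightarrow> nat \<Rightarrow> real" where
  "Lb a = (\<lambda>i. bas (i - a i))"

definition Fm :: "'a::real_normed_vector \<Rightarrow> 'a \<Rightarrow> 'a" where
  "Fm x y = (1 / norm (x - y)) *\<^sub>R (x - y)"

definition crl :: "nat \<Rightarrow> ((nat \<Rightarrow> real) \<Rightarrow> 'a::real_normed_vector) \<Rightarrow> ((nat \<Rightarrow> real) \<Rightarrow> 'a) \<Rightarrow> (nat \<Rightarrow> nat \<Rightarrow> real) \<Rightarrow> (nat \<Rightarrow> nat \<Rightarrow> real) \<Rightarrow> (nat \<Rightarrow> real) \<Rightarrow> 'a" where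
  "crl n f h l1 l2 = (\<lambda>x\<in>standard_simplex n. Fm (f (oriented_simplex n l1 x)) (h (oriented_simplex n l2 x)))"

definition cr :: "nat \<Rightarrow> ((nat \<Rightarrow> real) \<Rightarrow> 'a::real_normed_vector) \<Rightarrow> ((nat \<Rightarrow> real) \<Rightarrow> 'a) \<Rightarrow> (nat \<Rightarrow> nat) \<Rightarrow> (nat \<Rightarrow> real) \<Rightarrow> 'a" where
  "cr n f h a = crl n f h (La a) (Lb a)"

lemma crl_cong:
  assumes "\<And>i. i \<le> n \<Longrightarrow> l1 i = l1' i" "\<And>i. i \<le> n \<Longrightarrow> l2 i = l2' i"
  shows "crl n f h l1 l2 = crl n f h l1' l2'"
proof -
  have "oriented_simplex n l1 = oriented_simplex n l1'" "oriented_simplex n l2 = oriented_simplex n l2'"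
    using assms by (auto simp: oriented_simplex_eq)
  then show ?thesis by (simp add: crl_def)
qed

lemma face_crl:
  assumes "1 \<le> n" "k \<le> n"
  shows "singular_face n k (crl n f h l1 l2) = crl (n - 1) f h (l1 \<circ> sk k) (l2 \<circ> sk k)"
proof -
  have e: "(\<lambda>j. if j < k then l j else l (Suc j)) = l \<circ> sk k" for l :: "nat \<Rightarrow> nat \<Rightarrow> real"
    by (auto simp: sk_def fun_eq_iff)
  have os: "oriented_simplex n l (simplical_face k x) = oriented_simplex (n - 1) (l \<circ> sk k) x"
    if "x \<in> standard_simplex (n - 1)" for l x
  proof -
    have "singular_face n k (oriented_simplex n l) = oriented_simplex (n - 1) (l \<circ> sk k)"
    proof -
      have ee: "l \<circ> sk k = (\<lambda>j. if j < k then l j else l (Suc j))" by (auto simp: sk_def fun_eq_iff)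
      show ?thesis unfolding ee using singular_face_oriented_simplex[OF assms, of l] by simp
    qed
    then have "singular_face n k (oriented_simplex n l) x = oriented_simplex (n - 1) (l \<circ> sk k) x" by simp
    then show ?thesis using that by (simp add: singular_face_def)
  qed
  show ?thesis
  proof
    fix x
    show "singular_face n k (crl n f h l1 l2) x = crl (n - 1) f h (l1 \<circ> sk k) (l2 \<circ> sk k) x"
    proof (cases "x \<in> standard_simplex (n - 1)")
      case True
      then have "simplical_face k x \<in> standard_simplex n"
        using simplical_face_in_standard_simplex[OF assms] by simp
      then show ?thesis using True os[OF True, of l1] os[OF True, of l2] by (simp add: singular_face_def crl_def)
    next
      case False then show ?thesis by (simp add: singular_face_def crl_def)
    qed
  qed
qed

lemma sf_os:
  assumes "x \<in> standard_simplex m"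
  shows "simplical_face j (oriented_simplex m l x) = oriented_simplex m (\<lambda>i. simplical_face j (l i)) x"
  using assms by (auto simp: simplical_face_def oriented_simplex_def fun_eq_iff)

lemma sf_bas: "simplical_face j (bas m) = bas (shift j m)"
  by (auto simp: simplical_face_def bas_def shift_def fun_eq_iff)

lemma crl_face_f:
  assumes "\<And>x. x \<in> standard_simplex m \<Longrightarrow> oriented_simplex m l1 x \<in> standard_simplex (p - 1)"
  shows "crl m (singular_face p j f) h l1 l2 = crl m f h (\<lambda>i. simplical_face j (l1 i)) l2"
proof
  fix x show "crl m (singular_face p j f) h l1 l2 x = crl m f h (\<lambda>i. simplical_face j (l1 i)) l2 x"
    using assms[of x] sf_os[of x m j l1] by (simp add: crl_def singular_face_def)
qed

lemma crl_face_h: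
  assumes "\<And>x. x \<in> standard_simplex m \<Longrightarrow> oriented_simplex m l2 x \<in> standard_simplex (q - 1)"
  shows "crl m f (singular_face q j h) l1 l2 = crl m f h l1 (\<lambda>i. simplical_face j (l2 i))"
proof
  fix x show "crl m f (singular_face q j h) l1 l2 x = crl m f h l1 (\<lambda>i. simplical_face j (l2 i)) x"
    using assms[of x] sf_os[of x m j l2] by (simp add: crl_def singular_face_def)
qed

lemma os_in_simplex:
  assumes "\<And>i. i \<le> n \<Longrightarrow> l i \<in> standard_simplex p" "x \<in> standard_simplex n"
  shows "oriented_simplex n l x \<in> standard_simplex p"
proof -
  have x: "\<And>i. 0 \<le> x i" "sum x {..n} = 1" using assms(2) by (auto simp: standard_simplex_def)
  have l: "\<And>i t. i \<le> n \<Longrightarrow> 0 \<le> l i t \<and> l i t \<le> 1" "\<And>i t. i \<le> n \<Longrightarrow> t > p \<Longrightarrow> l i t = 0"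
    "\<And>i. i \<le> n \<Longrightarrow> (\<Sum>t\<le>p. l i t) = 1" using assms(1) by (auto simp: standard_simplex_def)
  have "0 \<le> (\<Sum>j\<le>n. l j t * x j)" for t by (rule sum_nonneg) (use l x in simp)
  moreover have "(\<Sum>j\<le>n. l j t * x j) \<le> 1" for t
  proof -
    have "(\<Sum>j\<le>n. l j t * x j) \<le> (\<Sum>j\<le>n. x j)"
      by (rule sum_mono) (use l x in \<open>simp add: mult_left_le_one_le\<close>)
    then show ?thesis using x by simp
  qed
  moreover have "(\<Sum>j\<le>n. l j t * x j) = 0" if "t > p" for t using l that by simp
  moreover have "(\<Sum>t\<le>p. \<Sum>j\<le>n. l j t * x j) = 1"
  proof -
    have "(\<Sum>t\<le>p. \<Sum>j\<le>n. l j t * x j) = (\<Sum>j\<le>n. (\<Sum>t\<le>p. l j t) * x j)"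
      by (simp add: sum.swap[of _ "{..p}"] sum_distrib_right)
    also have "\<dots> = (\<Sum>j\<le>n. x j)" using l by simp
    finally show ?thesis using x by simp
  qed
  ultimately show ?thesis using assms(2) by (simp add: oriented_simplex_def standard_simplex_def)
qed

lemma bas_in_simplex: "m \<le> p \<Longrightarrow> bas m \<in> standard_simplex p"
  by (simp add: basis_in_standard_simplex bas_def)

lemma os_La:
  assumes "a \<in> pth p q" "x \<in> standard_simplex (p+q)"
  shows "oriented_simplex (p+q) (La a) x \<in> standard_simplex p"
  by (rule os_in_simplex[OF _ assms(2)]) (use pth_le_p[OF assms(1)] bas_in_simplex in \<open>simp add: La_def\<close>)

lemma os_Lb:
  assumes "a \<in> pth p q" "x \<in> standard_simplex (p+q)"
  shows "oriented_simplex (p+q) (Lb a) x \<in> standard_simplex q"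
  by (rule os_in_simplex[OF _ assms(2)]) (use pth_b_le[OF assms(1)] bas_in_simplex in \<open>simp add: Lb_def\<close>)

lemma cr_singular:
  fixes f h :: "(nat \<Rightarrow> real) \<Rightarrow> 'a::real_normed_vector"
  assumes a: "a \<in> pth p q" and f: "singular_simplex p euclidean f" and h: "singular_simplex q euclidean h"
    and dj: "\<And>y z. y \<in> standard_simplex p \<Longrightarrow> z \<in> standard_simplex q \<Longrightarrow> f y \<noteq> h z"
  shows "singular_simplex (p+q) (top_of_set (sphere 0 1)) (cr (p+q) f h a)"
proof -
  let ?n = "p+q"
  let ?X = "subtopology (powertop_real UNIV) (standard_simplex ?n)"
  let ?oa = "oriented_simplex ?n (La a)"
  let ?ob = "oriented_simplex ?n (Lb a)"
  have "simplicial_simplex ?n (standard_simplex p) ?oa"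
    unfolding simplicial_simplex using os_La[OF a] by blast
  then have ca: "continuous_map ?X (subtopology (powertop_real UNIV) (standard_simplex p)) ?oa"
    using simplicial_imp_singular_simplex singular_simplex_def by blast
  have "simplicial_simplex ?n (standard_simplex q) ?ob"
    unfolding simplicial_simplex using os_Lb[OF a] by blast
  then have cb: "continuous_map ?X (subtopology (powertop_real UNIV) (standard_simplex q)) ?ob"
    using simplicial_imp_singular_simplex singular_simplex_def by blast
  have cf: "continuous_map (subtopology (powertop_real UNIV) (standard_simplex p)) euclidean f"
    using f singular_simplex_def by blast
  have ch: "continuous_map (subtopology (powertop_real UNIV) (standard_simplex q)) euclidean h"
    using h singular_simplex_def by blast
  have c1: "continuous_map ?X euclidean (\<lambda>x. f (?oa x))"
    using continuous_map_compose[OF ca cf] by (simp add: o_def)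
  have c2: "continuous_map ?X euclidean (\<lambda>x. h (?ob x))"
    using continuous_map_compose[OF cb ch] by (simp add: o_def)
  define d where "d x = f (?oa x) - h (?ob x)" for x
  have cd: "continuous_map ?X euclidean d"
    unfolding d_def by (rule continuous_map_diff[OF c1 c2])
  have nz: "d x \<in> - {0}" if "x \<in> topspace ?X" for x
  proof -
    have "x \<in> standard_simplex ?n" using that by simp
    then show ?thesis using dj os_La[OF a] os_Lb[OF a] by (simp add: d_def)
  qed
  have cd': "continuous_map ?X (top_of_set (- {0})) d"
    by (rule continuous_map_into_subtopology[OF cd]) (use nz in auto)
  define g :: "'a \<Rightarrow> 'a" where "g u = (1 / norm u) *\<^sub>R u" for u
  have "continuous_on (- {0}) g" unfolding g_def by (intro continuous_intros) auto
  then have cg: "continuous_map (top_of_set (- {0})) euclidean g"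
    by (simp add: continuous_map_iff_continuous)
  have cgd: "continuous_map ?X euclidean (g \<circ> d)" by (rule continuous_map_compose[OF cd' cg])
  have sph: "(g \<circ> d) x \<in> sphere 0 1" if "x \<in> topspace ?X" for x
  proof -
    have "d x \<noteq> 0" using nz[OF that] by simp
    then show ?thesis by (simp add: g_def)
  qed
  have cs: "continuous_map ?X (top_of_set (sphere 0 1)) (g \<circ> d)"
    by (rule continuous_map_into_subtopology[OF cgd]) (use sph in auto)
  have "continuous_map ?X (top_of_set (sphere 0 1)) (cr ?n f h a)"
  proof (rule continuous_map_eq[OF cs])
    fix x assume "x \<in> topspace ?X"
    then show "(g \<circ> d) x = cr ?n f h a x"
      by (simp add: g_def d_def cr_def crl_def Fm_def)
  qed
  moreover have "cr ?n f h a \<in> extensional (standard_simplex ?n)"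
    by (simp add: cr_def crl_def)
  ultimately show ?thesis by (simp add: singular_simplex_def)
qed

lemma Fm_swap: "Fm y x = - Fm x y"
  unfolding Fm_def by (metis minus_diff_eq norm_minus_commute scaleR_minus_right)

lemma cr_swap:
  assumes a: "a \<in> pth p q"
  shows "cr (p+q) h f (tr (p+q) a) = simplex_map (p+q) uminus (cr (p+q) f h a)"
proof -
  have "cr (p+q) h f (tr (p+q) a) = crl (p+q) h f (Lb a) (La a)"
    unfolding cr_def
  proof (rule crl_cong)
    fix i assume "i \<le> p+q"
    then show "La (tr (p+q) a) i = Lb a i" "Lb (tr (p+q) a) i = La a i"
      using pth_le_idx[OF a, of i] by (auto simp: La_def Lb_def tr_def)
  qed
  also have "\<dots> = simplex_map (p+q) uminus (cr (p+q) f h a)"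
  proof (rule ext)
    fix x
    show "crl (p+q) h f (Lb a) (La a) x = simplex_map (p+q) uminus (cr (p+q) f h a) x"
      using Fm_swap[of "h (oriented_simplex (p+q) (Lb a) x)" "f (oriented_simplex (p+q) (La a) x)"]
      by (simp add: crl_def cr_def simplex_map_def)
  qed
  finally show ?thesis .
qed

lemma simplex_map_uminus_inv:
  assumes "c \<in> extensional (standard_simplex n)"
  shows "simplex_map n uminus (simplex_map n (uminus :: 'a::ab_group_add \<Rightarrow> 'a) c) = c"
  using assms by (auto simp: simplex_map_def fun_eq_iff extensional_def)

lemma inj_simplex_map_uminus: "inj_on (simplex_map n (uminus :: 'a::ab_group_add \<Rightarrow> 'a)) (extensional (standard_simplex n))"
  by (metis inj_onI simplex_map_uminus_inv)

lemma face_cr_a: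
  assumes a: "a \<in> pth p q" and U: "aU (p+q) a k" and p: "1 \<le> p"
  shows "singular_face (p+q) k (cr (p+q) f h a) = cr (p+q-1) (singular_face p (a k) f) h (del (p+q) k a)"
proof -
  let ?n = "p+q"
  let ?b = "del ?n k a"
  have k: "k \<le> ?n" using U aU_def by auto
  have b: "?b \<in> pth (p - 1) q" by (rule del_pth[OF a U p])
  have nn: "p - 1 + q = ?n - 1" using p by simp
  have "singular_face ?n k (cr ?n f h a) = crl (?n - 1) f h (La a \<circ> sk k) (Lb a \<circ> sk k)"
    unfolding cr_def by (rule face_crl) (use p k in auto)
  also have "\<dots> = crl (?n - 1) f h (\<lambda>i. simplical_face (a k) (La ?b i)) (Lb ?b)"
  proof (rule crl_cong)
    fix i assume i: "i \<le> ?n - 1"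
    then have "i < ?n" using p by simp
    note r = del_rel[OF a U this]
    show "(La a \<circ> sk k) i = simplical_face (a k) (La ?b i)" using r(1) by (simp add: La_def sf_bas)
    show "(Lb a \<circ> sk k) i = Lb ?b i" using r(2) by (simp add: Lb_def)
  qed
  also have "\<dots> = crl (?n - 1) (singular_face p (a k) f) h (La ?b) (Lb ?b)"
  proof (rule crl_face_f[symmetric])
    fix x assume "x \<in> standard_simplex (?n - 1)"
    then show "oriented_simplex (?n - 1) (La ?b) x \<in> standard_simplex (p - 1)"
      using os_La[OF b] nn by simp
  qed
  finally show ?thesis by (simp add: cr_def)
qed

lemma face_cr_b:
  assumes a: "a \<in> pth p q" and U: "bU (p+q) a k" and q: "1 \<le> q"
  shows "singular_face (p+q) k (cr (p+q) f h a)
     = cr (p+q-1) f (singular_face q (tr (p+q) a k) h) (tr (p+q-1) (del (p+q) k (tr (p+q) a)))"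
proof -
  let ?n = "p+q"
  let ?a' = "tr ?n a"
  let ?b = "del ?n k ?a'"
  let ?c = "tr (?n - 1) ?b"
  have k: "k \<le> ?n" using U bU_def by auto
  have a': "?a' \<in> pth q p" by (rule tr_pth[OF a])
  have U': "aU (q+p) ?a' k" using bU_tr[OF a] U by (simp add: add.commute)
  have b: "?b \<in> pth (q - 1) p" using del_pth[OF a' U' q] by (simp add: add.commute)
  have nn: "q - 1 + p = ?n - 1" using q by simp
  have c: "?c \<in> pth p (q - 1)" using tr_pth[OF b] nn by simp
  have "singular_face ?n k (cr ?n f h a) = crl (?n - 1) f h (La a \<circ> sk k) (Lb a \<circ> sk k)"
    unfolding cr_def by (rule face_crl) (use q k in auto)
  also have "\<dots> = crl (?n - 1) f h (La ?c) (\<lambda>i. simplical_face (?a' k) (Lb ?c i))"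
  proof (rule crl_cong)
    fix i assume i: "i \<le> ?n - 1"
    then have il: "i < q+p" using q by simp
    note r = del_rel[OF a' U' il]
    have sk: "sk k i \<le> ?n" using il k by (auto simp: sk_def)
    have a1: "a (sk k i) \<le> sk k i" using pth_le_idx[OF a sk] .
    have t1: "?a' (sk k i) = sk k i - a (sk k i)" using sk by (simp add: tr_def)
    have bi: "?b i \<le> i" using pth_le_idx[OF b, of i] i nn by simp
    have e1: "a (sk k i) = i - ?b i" using r(2) t1 a1 by (simp add: add.commute)
    have e2: "sk k i - a (sk k i) = shift (?a' k) (?b i)" using r(1) t1 by (simp add: add.commute)
    show "(La a \<circ> sk k) i = La ?c i" using e1 i by (simp add: La_def tr_def)
    show "(Lb a \<circ> sk k) i = simplical_face (?a' k) (Lb ?c i)"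
      using e2 i bi by (simp add: Lb_def tr_def sf_bas)
  qed
  also have "\<dots> = crl (?n - 1) f (singular_face q (?a' k) h) (La ?c) (Lb ?c)"
  proof (rule crl_face_h[symmetric])
    fix x assume "x \<in> standard_simplex (?n - 1)"
    then show "oriented_simplex (?n - 1) (Lb ?c) x \<in> standard_simplex (q - 1)"
      using os_Lb[OF c] q by simp
  qed
  finally show ?thesis by (simp add: cr_def)
qed


definition Gm :: "'v set set \<Rightarrow> (nat \<Rightarrow> 'v set set \<Rightarrow> 'c set) \<Rightarrow> 'v set \<Rightarrow> 'c set" where
  "Gm K \<gamma> \<sigma> = (if \<sigma> \<in> K then \<gamma> (card \<sigma> - 1) {\<sigma>} else {})"

definition facs :: "'v set set \<Rightarrow> 'v set \<Rightarrow> 'v set set" where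
  "facs K \<sigma> = {\<sigma>'\<in>K. \<sigma>' \<subseteq> \<sigma> \<and> card \<sigma> = Suc (card \<sigma>')}"

lemma fsc_K:
  assumes "finite_simplicial_complex K" "\<sigma> \<in> K"
  shows "finite \<sigma>" "\<sigma> \<noteq> {}" "card \<sigma> \<ge> 1" "finite K"
  using assms by (auto simp: finite_simplicial_complex_def Suc_le_eq card_gt_0_iff)

lemma hae_zmap:
  assumes "hom_almost_embedding K \<gamma>"
  shows "zchain_map (ksimp K) (kbd K) (euclidean :: (real^'n) topology) (\<gamma> :: nat \<Rightarrow> 'v set set \<Rightarrow> ((nat \<Rightarrow> real) \<Rightarrow> real^'n) set)"
  using assms by (simp add: hom_almost_embedding_def)

lemma zmap_zchain:
  assumes "zchain_map cells bd X \<gamma>" "A \<subseteq> cells p"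
  shows "zchain p X (\<gamma> p A)"
  using assms unfolding zchain_map_def by blast

lemma zmap_bd:
  assumes "zchain_map cells bd X \<gamma>" "A \<subseteq> cells (Suc p)"
  shows "sbd (Suc p) (\<gamma> (Suc p) A) = \<gamma> p (bd A)"
  using assms unfolding zchain_map_def by blast

lemma single_ksimp:
  assumes "finite_simplicial_complex K" "\<sigma> \<in> K"
  shows "{\<sigma>} \<subseteq> ksimp K (card \<sigma> - 1)"
  using fsc_K[OF assms] assms by (simp add: ksimp_def)

lemma Gm_finite:
  assumes "finite_simplicial_complex K" "hom_almost_embedding K \<gamma>"
  shows "finite (Gm K \<gamma> \<sigma>)"
proof (cases "\<sigma> \<in> K")
  case True
  have "zchain (card \<sigma> - 1) euclidean (\<gamma> (card \<sigma> - 1) {\<sigma>})"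
    by (rule zmap_zchain[OF hae_zmap[OF assms(2)] single_ksimp[OF assms(1) True]])
  then show ?thesis using True by (simp add: Gm_def zchain_def)
qed (simp add: Gm_def)

lemma Gm_singular:
  assumes "finite_simplicial_complex K" "hom_almost_embedding K \<gamma>" "f \<in> Gm K \<gamma> \<sigma>"
  shows "singular_simplex (card \<sigma> - 1) euclidean f" "\<sigma> \<in> K"
proof -
  show K: "\<sigma> \<in> K" using assms(3) by (simp add: Gm_def split: if_splits)
  have "zchain (card \<sigma> - 1) euclidean (\<gamma> (card \<sigma> - 1) {\<sigma>})"
    by (rule zmap_zchain[OF hae_zmap[OF assms(2)] single_ksimp[OF assms(1) K]])
  then show "singular_simplex (card \<sigma> - 1) euclidean f" using assms(3) K by (simp add: Gm_def zchain_def)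
qed

lemma Gm_disj:
  assumes "hom_almost_embedding K \<gamma>" "\<sigma> \<inter> \<tau> = {}" "f \<in> Gm K \<gamma> \<sigma>" "h \<in> Gm K \<gamma> \<tau>"
    "y \<in> standard_simplex (card \<sigma> - 1)" "z \<in> standard_simplex (card \<tau> - 1)"
  shows "f y \<noteq> h z"
proof -
  have K: "\<sigma> \<in> K" "\<tau> \<in> K" using assms(3,4) by (simp_all add: Gm_def split: if_splits)
  have "ssupp (card \<sigma> - 1) (\<gamma> (card \<sigma> - 1) {\<sigma>}) \<inter> ssupp (card \<tau> - 1) (\<gamma> (card \<tau> - 1) {\<tau>}) = {}"
    using assms(1,2) K unfolding hom_almost_embedding_def by blast
  moreover have "f y \<in> ssupp (card \<sigma> - 1) (\<gamma> (card \<sigma> - 1) {\<sigma>})" using assms(3,5) K by (auto simp: ssupp_def Gm_def)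
  moreover have "h z \<in> ssupp (card \<tau> - 1) (\<gamma> (card \<tau> - 1) {\<tau>})" using assms(4,6) K by (auto simp: ssupp_def Gm_def)
  ultimately show ?thesis by auto
qed

lemma kbd_single:
  assumes "\<sigma> \<in> K"
  shows "kbd K {\<sigma>} = facs K \<sigma>"
proof -
  have "{s\<in>{\<sigma>}. \<tau> \<subseteq> s \<and> card s = Suc (card \<tau>)} = (if \<tau> \<subseteq> \<sigma> \<and> card \<sigma> = Suc (card \<tau>) then {\<sigma>} else {})" for \<tau>
    by auto
  then show ?thesis by (auto simp: kbd_def facs_def)
qed

lemma Gm_bd:
  assumes fsc: "finite_simplicial_complex K" and hae: "hom_almost_embedding K \<gamma>"
    and K: "\<sigma> \<in> K" and P: "card \<sigma> = Suc P" "P \<ge> 1"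
  shows "red (Gm K \<gamma> \<sigma> \<times> {..P}) (\<lambda>(f,j). singular_face P j f) = red (Sigma (facs K \<sigma>) (Gm K \<gamma>)) snd"
proof -
  note Z = hae_zmap[OF hae]
  have G: "Gm K \<gamma> \<sigma> = \<gamma> (Suc (P - 1)) {\<sigma>}" using K P by (simp add: Gm_def)
  have "red (Gm K \<gamma> \<sigma> \<times> {..P}) (\<lambda>(f,j). singular_face P j f) = sbd P (Gm K \<gamma> \<sigma>)"
    using sbd_red[OF Gm_finite[OF fsc hae], of P \<sigma>] P by simp
  also have "\<dots> = sbd (Suc (P - 1)) (\<gamma> (Suc (P - 1)) {\<sigma>})" using G P by simp
  also have "\<dots> = \<gamma> (P - 1) (kbd K {\<sigma>})"
    by (rule zmap_bd[OF Z]) (use K P in \<open>simp add: ksimp_def\<close>)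
  also have "\<dots> = \<gamma> (P - 1) (facs K \<sigma>)" using kbd_single[OF K] by simp
  also have "\<dots> = red (Sigma (facs K \<sigma>) (\<lambda>s. \<gamma> (P - 1) {s})) snd"
  proof (rule zmap_expand[OF Z])
    have "facs K \<sigma> \<subseteq> K" by (auto simp: facs_def)
    then show "finite (facs K \<sigma>)" using fsc_K(4)[OF fsc K] finite_subset by blast
    show "facs K \<sigma> \<subseteq> ksimp K (P - 1)" using P by (auto simp: facs_def ksimp_def)
  qed
  also have "\<dots> = red (Sigma (facs K \<sigma>) (Gm K \<gamma>)) snd"
  proof -
    have "Sigma (facs K \<sigma>) (\<lambda>s. \<gamma> (P - 1) {s}) = Sigma (facs K \<sigma>) (Gm K \<gamma>)"
      using P by (auto simp: facs_def Gm_def)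
    then show ?thesis by simp
  qed
  finally show ?thesis .
qed

definition Ixs :: "'v set set \<Rightarrow> (nat \<Rightarrow> 'v set set \<Rightarrow> ((nat \<Rightarrow> real) \<Rightarrow> 'a) set) \<Rightarrow> 'v set \<times> 'v set
    \<Rightarrow> (((nat \<Rightarrow> real) \<Rightarrow> 'a) \<times> ((nat \<Rightarrow> real) \<Rightarrow> 'a) \<times> (nat \<Rightarrow> nat)) set" where
  "Ixs K \<gamma> c = Gm K \<gamma> (fst c) \<times> Gm K \<gamma> (snd c) \<times> pth (card (fst c) - 1) (card (snd c) - 1)"

definition Crs :: "'v set set \<Rightarrow> (nat \<Rightarrow> 'v set set \<Rightarrow> ((nat \<Rightarrow> real) \<Rightarrow> 'a::real_normed_vector) set) \<Rightarrow> 'v set \<times> 'v set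
    \<Rightarrow> ((nat \<Rightarrow> real) \<Rightarrow> 'a) set" where
  "Crs K \<gamma> c = red (Ixs K \<gamma> c) (\<lambda>(f,h,a). cr (card (fst c) - 1 + (card (snd c) - 1)) f h a)"

lemma bij_prod_right:
  assumes "bij_betw D P J"
  shows "bij_betw (\<lambda>(g,x). (g, D x)) (G \<times> P) (G \<times> J)"
proof -
  have "inj_on (\<lambda>(g,x). (g, D x)) (G \<times> P)"
    using assms unfolding bij_betw_def inj_on_def by auto
  moreover have "(\<lambda>(g,x). (g, D x)) ` (G \<times> P) = G \<times> J"
  proof (intro equalityI subsetI)
    fix y assume "y \<in> (\<lambda>(g,x). (g, D x)) ` (G \<times> P)"
    then show "y \<in> G \<times> J" using assms unfolding bij_betw_def by auto
  next
    fix y assume y: "y \<in> G \<times> J"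
    then obtain g j where gj: "y = (g,j)" "g \<in> G" "j \<in> J" by auto
    then obtain x where "x \<in> P" "D x = j" using assms unfolding bij_betw_def by (metis imageE)
    then show "y \<in> (\<lambda>(g,x). (g, D x)) ` (G \<times> P)" using gj by force
  qed
  ultimately show ?thesis by (simp add: bij_betw_def)
qed

lemma red_face_push:
  fixes P :: nat
  assumes "finite S1" "finite S2" "finite B" "finite F1" "\<And>x. finite (\<Gamma> x)"
    and E: "red (S1 \<times> {..P}) (\<lambda>(f,j). fc j f) = red (Sigma F1 \<Gamma>) snd"
  shows "red ((S1 \<times> {..P}) \<times> (S2 \<times> B)) (\<lambda>((f,j),(h,b)). \<Psi> (fc j f) h b)
       = red (Sigma F1 \<Gamma> \<times> (S2 \<times> B)) (\<lambda>((s,f'),(h,b)). \<Psi> f' h b)"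
proof -
  let ?\<phi> = "\<lambda>(f,j). fc j f"
  let ?\<Psi> = "\<lambda>(x,(h,b)). \<Psi> x h b"
  have f1: "finite (S1 \<times> {..P})" using assms(1) by simp
  have f2: "finite (Sigma F1 \<Gamma>)" using assms(4,5) by simp
  have "red ((S1 \<times> {..P}) \<times> (S2 \<times> B)) (\<lambda>((f,j),(h,b)). \<Psi> (fc j f) h b)
      = red (Sigma (S1 \<times> {..P}) (\<lambda>i. (\<lambda>_. S2 \<times> B) (?\<phi> i))) (\<lambda>(i,t). ?\<Psi> (?\<phi> i, t))"
    by (rule red_cong) auto
  also have "\<dots> = red (Sigma (red (S1 \<times> {..P}) ?\<phi>) (\<lambda>_. S2 \<times> B)) ?\<Psi>"
    by (rule red_group[symmetric]) (use f1 assms(1-5) in auto)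
  also have "\<dots> = red (Sigma (red (Sigma F1 \<Gamma>) snd) (\<lambda>_. S2 \<times> B)) ?\<Psi>" using E by simp
  also have "\<dots> = red (Sigma (Sigma F1 \<Gamma>) (\<lambda>i. (\<lambda>_. S2 \<times> B) (snd i))) (\<lambda>(i,t). ?\<Psi> (snd i, t))"
    by (rule red_group) (use f2 assms(1-5) in auto)
  also have "\<dots> = red (Sigma F1 \<Gamma> \<times> (S2 \<times> B)) (\<lambda>((s,f'),(h,b)). \<Psi> f' h b)"
    by (rule red_cong) auto
  finally show ?thesis .
qed

lemma finite_pairs_pth: fixes n :: nat shows "finite {(a,k). a \<in> pth p q \<and> P a k \<and> k \<le> n}"
proof -
  have "{(a,k). a \<in> pth p q \<and> P a k \<and> k \<le> n} \<subseteq> pth p q \<times> {..n}" by auto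
  then show ?thesis using finite_pth by (meson finite_SigmaI finite_atMost finite_subset)
qed

lemma partC:
  assumes "finite G" "ps + qs = Suc m"
  shows "red (G \<times> {(a,k). a \<in> pth ps qs \<and> k \<le> Suc m \<and> \<not> aU (Suc m) a k \<and> \<not> bU (Suc m) a k})
     (\<lambda>((f,h),(a,k)). singular_face (Suc m) k (cr (Suc m) f h a)) = {}"
proof -
  let ?PC = "{(a,k). a \<in> pth ps qs \<and> k \<le> Suc m \<and> \<not> aU (Suc m) a k \<and> \<not> bU (Suc m) a k}"
  let ?\<iota> = "\<lambda>((f,h),(a,k)). ((f,h),(flip k a, k))"
  have n: "ps + qs \<ge> 1" using assms by simp
  have fin: "finite ?PC"
  proof -
    have "?PC \<subseteq> pth ps qs \<times> {..Suc m}" by auto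
    then show ?thesis using finite_pth by (meson finite_SigmaI finite_atMost finite_subset)
  qed
  show ?thesis
  proof (rule red_invol[where \<iota>="?\<iota>"])
    show "finite (G \<times> ?PC)" using fin assms(1) by simp
  next
    fix x assume x: "x \<in> G \<times> ?PC"
    then obtain f h a k where xe: "x = ((f,h),(a,k))" and a: "a \<in> pth ps qs" and k: "k \<le> ps+qs"
      and nA: "\<not> aU (ps+qs) a k" and nB: "\<not> bU (ps+qs) a k" and g: "(f,h) \<in> G"
      using assms(2) by auto
    note F = flip_props[OF a n k nA nB]
    show "?\<iota> x \<in> G \<times> ?PC" using F xe g k assms(2) by auto
    show "?\<iota> (?\<iota> x) = x" using F xe by auto
    show "?\<iota> x \<noteq> x" using F xe by auto
    show "(\<lambda>((f,h),(a,k)). singular_face (Suc m) k (cr (Suc m) f h a)) (?\<iota> x) =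
          (\<lambda>((f,h),(a,k)). singular_face (Suc m) k (cr (Suc m) f h a)) x"
    proof -
      have k': "k \<le> Suc m" using k assms(2) by simp
      have "singular_face (Suc m) k (cr (Suc m) f h (flip k a)) = crl (Suc m - 1) f h (La (flip k a) \<circ> sk k) (Lb (flip k a) \<circ> sk k)"
        unfolding cr_def by (rule face_crl) (use k' in auto)
      also have "\<dots> = crl (Suc m - 1) f h (La a \<circ> sk k) (Lb a \<circ> sk k)"
      proof (rule crl_cong)
        fix i
        have "sk k i \<noteq> k" by (simp add: sk_def)
        then have "flip k a (sk k i) = a (sk k i)" using F(6) by simp
        then show "(La (flip k a) \<circ> sk k) i = (La a \<circ> sk k) i" "(Lb (flip k a) \<circ> sk k) i = (Lb a \<circ> sk k) i"
          by (simp_all add: La_def Lb_def)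
      qed
      also have "\<dots> = singular_face (Suc m) k (cr (Suc m) f h a)"
        unfolding cr_def by (rule face_crl[symmetric]) (use k' in auto)
      finally show ?thesis using xe by simp
    qed
  qed
qed

lemma facs_card:
  assumes "finite_simplicial_complex K" "s \<in> facs K \<sigma>" "card \<sigma> = Suc ps"
  shows "card s = ps" "ps \<ge> 1" "s \<in> K"
proof -
  show "card s = ps" "s \<in> K" using assms(2,3) by (auto simp: facs_def)
  then show "ps \<ge> 1" using fsc_K(3)[OF assms(1)] by fastforce
qed

lemma finite_facs:
  assumes "finite_simplicial_complex K" "\<sigma> \<in> K"
  shows "finite (facs K \<sigma>)"
proof -
  have "facs K \<sigma> \<subseteq> K" by (auto simp: facs_def)
  then show ?thesis using fsc_K(4)[OF assms] finite_subset by blast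
qed

lemma Crs_flat:
  fixes F :: "('v set \<times> 'v set) set" and \<gamma> :: "nat \<Rightarrow> 'v set set \<Rightarrow> ((nat \<Rightarrow> real) \<Rightarrow> 'a::real_normed_vector) set"
  assumes "finite F" "\<And>d. finite (Ixs K \<gamma> d)"
  shows "red (Sigma F (Crs K \<gamma>)) snd = red (Sigma F (Ixs K \<gamma>)) (\<lambda>(d,(f,h,a)). cr (card (fst d) - 1 + (card (snd d) - 1)) f h a)"
proof -
  define \<psi> where "\<psi> = (\<lambda>(d::'v set \<times> 'v set) (f::(nat \<Rightarrow> real) \<Rightarrow> 'a,h,a). cr (card (fst d) - 1 + (card (snd d) - 1)) f h a)"
  have "red (Sigma F (\<lambda>d. red (Ixs K \<gamma> d) (\<psi> d))) snd = red (Sigma F (Ixs K \<gamma>)) (\<lambda>(d,j). \<psi> d j)"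
    by (rule red_flat) (use assms in auto)
  moreover have "(\<lambda>d. red (Ixs K \<gamma> d) (\<psi> d)) = Crs K \<gamma>" by (simp add: Crs_def \<psi>_def fun_eq_iff)
  moreover have "(\<lambda>(d,j). \<psi> d j) = (\<lambda>(d,(f,h,a)). cr (card (fst d) - 1 + (card (snd d) - 1)) f h a)"
    by (simp add: \<psi>_def fun_eq_iff)
  ultimately show ?thesis by simp
qed

lemma Ixs_finite:
  assumes "finite_simplicial_complex K" "hom_almost_embedding K \<gamma>"
  shows "finite (Ixs K \<gamma> d)"
  using Gm_finite[OF assms] finite_pth by (simp add: Ixs_def)

lemma partA:
  assumes fsc: "finite_simplicial_complex K" and hae: "hom_almost_embedding K \<gamma>"
    and K: "\<sigma> \<in> K" "\<tau> \<in> K" and cs: "card \<sigma> = Suc ps" "card \<tau> = Suc qs" and n: "ps + qs = Suc m"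
  shows "red ((Gm K \<gamma> \<sigma> \<times> Gm K \<gamma> \<tau>) \<times> {(a,k). a \<in> pth ps qs \<and> aU (Suc m) a k})
     (\<lambda>((f,h),(a,k)). singular_face (Suc m) k (cr (Suc m) f h a))
   = red (Sigma ((\<lambda>s. (s,\<tau>)) ` facs K \<sigma>) (Crs K \<gamma>)) snd"
proof (cases "ps = 0")
  case True
  have e1: "{(a,k). a \<in> pth ps qs \<and> aU (Suc m) a k} = {}"
    using aU_p[of _ ps qs] n True by fastforce
  have e2: "facs K \<sigma> = {}" using facs_card[OF fsc _ cs(1)] True by fastforce
  show ?thesis unfolding e1 e2 by simp
next
  case False
  then have ps: "ps \<ge> 1" by simp
  let ?G = "Gm K \<gamma> \<sigma> \<times> Gm K \<gamma> \<tau>"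
  let ?PA = "{(a,k). a \<in> pth ps qs \<and> aU (Suc m) a k}"
  let ?JA = "{(j,b). j \<le> ps \<and> b \<in> pth (ps - 1) qs}"
  let ?V = "\<lambda>((f,h),(a,k)). singular_face (Suc m) k (cr (Suc m) f h a)"
  let ?VA = "\<lambda>((f,h),(j,b)). cr m (singular_face ps j f) h b"
  have fG: "finite (Gm K \<gamma> \<rho>)" for \<rho> by (rule Gm_finite[OF fsc hae])
  have bd: "bij_betw (\<lambda>(a,k). (a k, del (ps+qs) k a)) ?PA ?JA"
    using bij_del[OF ps, of qs] n by simp
  have b1: "bij_betw (\<lambda>(g,x). (g, (\<lambda>(a,k). (a k, del (ps+qs) k a)) x)) (?G \<times> ?PA) (?G \<times> ?JA)"
    by (rule bij_prod_right[OF bd])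
  have "red (?G \<times> ?JA) ?VA = red (?G \<times> ?PA) (?VA \<circ> (\<lambda>(g,x). (g, (\<lambda>(a,k). (a k, del (ps+qs) k a)) x)))"
    by (rule red_bij[OF b1])
  also have "\<dots> = red (?G \<times> ?PA) ?V"
  proof (rule red_cong)
    fix x assume "x \<in> ?G \<times> ?PA"
    then obtain f h a k where xe: "x = ((f,h),(a,k))" and a: "a \<in> pth ps qs" and U: "aU (ps+qs) a k"
      using n by auto
    have "singular_face (ps+qs) k (cr (ps+qs) f h a) = cr (ps+qs-1) (singular_face ps (a k) f) h (del (ps+qs) k a)"
      by (rule face_cr_a[OF a U ps])
    then show "(?VA \<circ> (\<lambda>(g,x). (g, (\<lambda>(a,k). (a k, del (ps+qs) k a)) x))) x = ?V x"
      using xe n by simp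
  qed simp
  finally have s1: "red (?G \<times> ?PA) ?V = red (?G \<times> ?JA) ?VA" by simp
  have b2: "bij_betw (\<lambda>((f,j),(h,b)). ((f,h),(j,b))) ((Gm K \<gamma> \<sigma> \<times> {..ps}) \<times> (Gm K \<gamma> \<tau> \<times> pth (ps - 1) qs)) (?G \<times> ?JA)"
    by (rule bij_betw_byWitness[where f'="\<lambda>((f,h),(j,b)). ((f,j),(h,b))"]) auto
  have s2: "red (?G \<times> ?JA) ?VA = red ((Gm K \<gamma> \<sigma> \<times> {..ps}) \<times> (Gm K \<gamma> \<tau> \<times> pth (ps - 1) qs))
      (\<lambda>((f,j),(h,b)). (\<lambda>f' h b. cr m f' h b) (singular_face ps j f) h b)"
    by (subst red_bij[OF b2]) (rule red_cong, auto)
  have s3: "\<dots> = red (Sigma (facs K \<sigma>) (Gm K \<gamma>) \<times> (Gm K \<gamma> \<tau> \<times> pth (ps - 1) qs)) (\<lambda>((s,f'),(h,b)). cr m f' h b)"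
    by (rule red_face_push[OF fG fG finite_pth finite_facs[OF fsc K(1)] fG Gm_bd[OF fsc hae K(1) cs(1) ps]])
  let ?Fa = "(\<lambda>s. (s,\<tau>)) ` facs K \<sigma>"
  have fFa: "finite ?Fa" using finite_facs[OF fsc K(1)] by simp
  have s4: "red (Sigma ?Fa (Crs K \<gamma>)) snd = red (Sigma ?Fa (Ixs K \<gamma>)) (\<lambda>(d,(f,h,a)). cr (card (fst d) - 1 + (card (snd d) - 1)) f h a)"
    by (rule Crs_flat[OF fFa Ixs_finite[OF fsc hae]])
  have b3: "bij_betw (\<lambda>((s,f'),(h,b)). ((s,\<tau>),(f',h,b))) (Sigma (facs K \<sigma>) (Gm K \<gamma>) \<times> (Gm K \<gamma> \<tau> \<times> pth (ps - 1) qs)) (Sigma ?Fa (Ixs K \<gamma>))"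
  proof (rule bij_betw_byWitness[where f'="\<lambda>((s,t),(f',h,b)). ((s,f'),(h,b))"])
    show "\<forall>x\<in>Sigma (facs K \<sigma>) (Gm K \<gamma>) \<times> (Gm K \<gamma> \<tau> \<times> pth (ps - 1) qs). (\<lambda>((s,t),(f',h,b)). ((s,f'),(h,b))) ((\<lambda>((s,f'),(h,b)). ((s,\<tau>),(f',h,b))) x) = x"
      by auto
    show "\<forall>y\<in>Sigma ?Fa (Ixs K \<gamma>). (\<lambda>((s,f'),(h,b)). ((s,\<tau>),(f',h,b))) ((\<lambda>((s,t),(f',h,b)). ((s,f'),(h,b))) y) = y"
      by auto
    show "(\<lambda>((s,f'),(h,b)). ((s,\<tau>),(f',h,b))) ` (Sigma (facs K \<sigma>) (Gm K \<gamma>) \<times> (Gm K \<gamma> \<tau> \<times> pth (ps - 1) qs)) \<subseteq> Sigma ?Fa (Ixs K \<gamma>)"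
      using facs_card[OF fsc _ cs(1)] cs(2) by (auto simp: Ixs_def)
    show "(\<lambda>((s,t),(f',h,b)). ((s,f'),(h,b))) ` Sigma ?Fa (Ixs K \<gamma>) \<subseteq> Sigma (facs K \<sigma>) (Gm K \<gamma>) \<times> (Gm K \<gamma> \<tau> \<times> pth (ps - 1) qs)"
      using facs_card[OF fsc _ cs(1)] cs(2) by (auto simp: Ixs_def)
  qed
  have s5: "red (Sigma ?Fa (Ixs K \<gamma>)) (\<lambda>(d,(f,h,a)). cr (card (fst d) - 1 + (card (snd d) - 1)) f h a)
      = red (Sigma (facs K \<sigma>) (Gm K \<gamma>) \<times> (Gm K \<gamma> \<tau> \<times> pth (ps - 1) qs)) (\<lambda>((s,f'),(h,b)). cr m f' h b)"
  proof (subst red_bij[OF b3], rule red_cong)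
    fix x assume "x \<in> Sigma (facs K \<sigma>) (Gm K \<gamma>) \<times> (Gm K \<gamma> \<tau> \<times> pth (ps - 1) qs)"
    then obtain s f' h b where xe: "x = ((s,f'),(h,b))" and s: "s \<in> facs K \<sigma>" by auto
    have "card s - 1 + (card \<tau> - 1) = m" using facs_card[OF fsc s cs(1)] cs(2) n by simp
    then show "((\<lambda>(d,(f,h,a)). cr (card (fst d) - 1 + (card (snd d) - 1)) f h a) \<circ> (\<lambda>((s,f'),(h,b)). ((s,\<tau>),(f',h,b)))) x
        = (\<lambda>((s,f'),(h,b)). cr m f' h b) x" using xe by simp
  qed simp
  show ?thesis using s1 s2 s3 s4 s5 by simp
qed

lemma bij_PB:
  assumes q: "qs \<ge> 1"
  shows "bij_betw (\<lambda>(a,k). (tr (ps+qs) a k, tr (ps+qs-1) (del (ps+qs) k (tr (ps+qs) a))))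
     {(a,k). a \<in> pth ps qs \<and> bU (ps+qs) a k} {(j,c). j \<le> qs \<and> c \<in> pth ps (qs - 1)}"
proof -
  let ?n = "ps+qs"
  let ?PB = "{(a,k). a \<in> pth ps qs \<and> bU ?n a k}"
  let ?PA = "{(a,k). a \<in> pth qs ps \<and> aU (qs+ps) a k}"
  let ?J1 = "{(j,b). j \<le> qs \<and> b \<in> pth (qs - 1) ps}"
  let ?JB = "{(j,c). j \<le> qs \<and> c \<in> pth ps (qs - 1)}"
  have b1: "bij_betw (\<lambda>(a,k). (tr ?n a, k)) ?PB ?PA"
  proof (rule bij_betw_byWitness[where f'="\<lambda>(a,k). (tr ?n a, k)"])
    show "\<forall>x\<in>?PB. (\<lambda>(a,k). (tr ?n a, k)) ((\<lambda>(a,k). (tr ?n a, k)) x) = x" using tr_tr by auto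
    show "\<forall>x\<in>?PA. (\<lambda>(a,k). (tr ?n a, k)) ((\<lambda>(a,k). (tr ?n a, k)) x) = x" using tr_tr[of _ qs ps] by (auto simp: add.commute)
    show "(\<lambda>(a,k). (tr ?n a, k)) ` ?PB \<subseteq> ?PA" using tr_pth bU_tr by (auto simp: add.commute)
    show "(\<lambda>(a,k). (tr ?n a, k)) ` ?PA \<subseteq> ?PB"
    proof
      fix y assume "y \<in> (\<lambda>(a,k). (tr ?n a, k)) ` ?PA"
      then obtain a k where a: "a \<in> pth qs ps" and U: "aU (qs+ps) a k" and y: "y = (tr ?n a, k)" by auto
      have a2: "tr ?n a \<in> pth ps qs" using tr_pth[OF a] by (simp add: add.commute)
      have "tr ?n (tr ?n a) = a" using tr_tr[OF a] by (simp add: add.commute)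
      then have "bU ?n (tr ?n a) k" using bU_tr[OF a2, of k] U by (simp add: add.commute)
      then show "y \<in> ?PB" using a2 y by simp
    qed
  qed
  have b2: "bij_betw (\<lambda>(a,k). (a k, del (qs+ps) k a)) ?PA ?J1" by (rule bij_del[OF q])
  have e3: "?J1 = {..qs} \<times> pth (qs - 1) ps" "?JB = {..qs} \<times> pth ps (qs - 1)" by auto
  have bt: "bij_betw (tr (qs - 1 + ps)) (pth (qs - 1) ps) (pth ps (qs - 1))" by (rule bij_tr)
  have b3: "bij_betw (\<lambda>(j,b). (j, tr (?n - 1) b)) ?J1 ?JB"
    unfolding e3 using bij_prod_right[OF bt, of "{..qs}"] q by (simp add: add.commute)
  have b123: "bij_betw ((\<lambda>(j,b). (j, tr (?n - 1) b)) \<circ> (\<lambda>(a,k). (a k, del (qs+ps) k a)) \<circ> (\<lambda>(a,k). (tr ?n a, k))) ?PB ?JB"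
    by (rule bij_betw_trans[OF b1 bij_betw_trans[OF b2 b3]]) 
  show ?thesis
    by (rule bij_betw_cong[THEN iffD1, OF _ b123]) (auto simp: add.commute)
qed

lemma partB:
  assumes fsc: "finite_simplicial_complex K" and hae: "hom_almost_embedding K \<gamma>"
    and K: "\<sigma> \<in> K" "\<tau> \<in> K" and cs: "card \<sigma> = Suc ps" "card \<tau> = Suc qs" and n: "ps + qs = Suc m"
  shows "red ((Gm K \<gamma> \<sigma> \<times> Gm K \<gamma> \<tau>) \<times> {(a,k). a \<in> pth ps qs \<and> bU (Suc m) a k})
     (\<lambda>((f,h),(a,k)). singular_face (Suc m) k (cr (Suc m) f h a))
   = red (Sigma ((\<lambda>s. (\<sigma>,s)) ` facs K \<tau>) (Crs K \<gamma>)) snd"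
proof (cases "qs = 0")
  case True
  have e1: "{(a,k). a \<in> pth ps qs \<and> bU (Suc m) a k} = {}"
  proof -
    have "\<not> bU (Suc m) a k" if a: "a \<in> pth ps qs" for a k
    proof
      assume "bU (Suc m) a k"
      then have "aU (qs+ps) (tr (ps+qs) a) k" using bU_tr[OF a] n by (simp add: add.commute)
      then show False using aU_p[OF tr_pth[OF a]] n True by (simp add: add.commute)
    qed
    then show ?thesis by auto
  qed
  have e2: "facs K \<tau> = {}" using facs_card[OF fsc _ cs(2)] True by fastforce
  show ?thesis unfolding e1 e2 by simp
next
  case False
  then have q: "qs \<ge> 1" by simp
  let ?G = "Gm K \<gamma> \<sigma> \<times> Gm K \<gamma> \<tau>"
  let ?PB = "{(a,k). a \<in> pth ps qs \<and> bU (Suc m) a k}"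
  let ?JB = "{(j,c). j \<le> qs \<and> c \<in> pth ps (qs - 1)}"
  let ?D = "\<lambda>(a,k). (tr (ps+qs) a k, tr (ps+qs-1) (del (ps+qs) k (tr (ps+qs) a)))"
  let ?V = "\<lambda>((f,h),(a,k)). singular_face (Suc m) k (cr (Suc m) f h a)"
  let ?VB = "\<lambda>((f,h),(j,c)). cr m f (singular_face qs j h) c"
  have fG: "finite (Gm K \<gamma> \<rho>)" for \<rho> by (rule Gm_finite[OF fsc hae])
  have bd: "bij_betw ?D ?PB ?JB" using bij_PB[OF q, of ps] n by simp
  have b1: "bij_betw (\<lambda>(g,x). (g, ?D x)) (?G \<times> ?PB) (?G \<times> ?JB)"
    by (rule bij_prod_right[OF bd])
  have "red (?G \<times> ?JB) ?VB = red (?G \<times> ?PB) (?VB \<circ> (\<lambda>(g,x). (g, ?D x)))"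
    by (rule red_bij[OF b1])
  also have "\<dots> = red (?G \<times> ?PB) ?V"
  proof (rule red_cong)
    fix x assume "x \<in> ?G \<times> ?PB"
    then obtain f h a k where xe: "x = ((f,h),(a,k))" and a: "a \<in> pth ps qs" and U: "bU (ps+qs) a k"
      using n by auto
    have "singular_face (ps+qs) k (cr (ps+qs) f h a) = cr (ps+qs-1) f (singular_face qs (tr (ps+qs) a k) h) (tr (ps+qs-1) (del (ps+qs) k (tr (ps+qs) a)))"
      by (rule face_cr_b[OF a U q])
    then show "(?VB \<circ> (\<lambda>(g,x). (g, ?D x))) x = ?V x"
      using xe n by simp
  qed simp
  finally have s1: "red (?G \<times> ?PB) ?V = red (?G \<times> ?JB) ?VB" by simp
  have b2: "bij_betw (\<lambda>((h,j),(f,c)). ((f,h),(j,c))) ((Gm K \<gamma> \<tau> \<times> {..qs}) \<times> (Gm K \<gamma> \<sigma> \<times> pth ps (qs - 1))) (?G \<times> ?JB)"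
    by (rule bij_betw_byWitness[where f'="\<lambda>((f,h),(j,c)). ((h,j),(f,c))"]) auto
  have s2: "red (?G \<times> ?JB) ?VB = red ((Gm K \<gamma> \<tau> \<times> {..qs}) \<times> (Gm K \<gamma> \<sigma> \<times> pth ps (qs - 1)))
      (\<lambda>((h,j),(f,c)). (\<lambda>h' f c. cr m f h' c) (singular_face qs j h) f c)"
    by (subst red_bij[OF b2]) (rule red_cong, auto)
  have s3: "\<dots> = red (Sigma (facs K \<tau>) (Gm K \<gamma>) \<times> (Gm K \<gamma> \<sigma> \<times> pth ps (qs - 1))) (\<lambda>((s,h'),(f,c)). cr m f h' c)"
    by (rule red_face_push[OF fG fG finite_pth finite_facs[OF fsc K(2)] fG Gm_bd[OF fsc hae K(2) cs(2) q]])
  let ?Fb = "(\<lambda>s. (\<sigma>,s)) ` facs K \<tau>"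
  have fFb: "finite ?Fb" using finite_facs[OF fsc K(2)] by simp
  have s4: "red (Sigma ?Fb (Crs K \<gamma>)) snd = red (Sigma ?Fb (Ixs K \<gamma>)) (\<lambda>(d,(f,h,a)). cr (card (fst d) - 1 + (card (snd d) - 1)) f h a)"
    by (rule Crs_flat[OF fFb Ixs_finite[OF fsc hae]])
  have b3: "bij_betw (\<lambda>((s,h'),(f,c)). ((\<sigma>,s),(f,h',c))) (Sigma (facs K \<tau>) (Gm K \<gamma>) \<times> (Gm K \<gamma> \<sigma> \<times> pth ps (qs - 1))) (Sigma ?Fb (Ixs K \<gamma>))"
  proof (rule bij_betw_byWitness[where f'="\<lambda>((t,s),(f,h',c)). ((s,h'),(f,c))"])
    show "\<forall>x\<in>Sigma (facs K \<tau>) (Gm K \<gamma>) \<times> (Gm K \<gamma> \<sigma> \<times> pth ps (qs - 1)). (\<lambda>((t,s),(f,h',c)). ((s,h'),(f,c))) ((\<lambda>((s,h'),(f,c)). ((\<sigma>,s),(f,h',c))) x) = x"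
      by auto
    show "\<forall>y\<in>Sigma ?Fb (Ixs K \<gamma>). (\<lambda>((s,h'),(f,c)). ((\<sigma>,s),(f,h',c))) ((\<lambda>((t,s),(f,h',c)). ((s,h'),(f,c))) y) = y"
      by auto
    show "(\<lambda>((s,h'),(f,c)). ((\<sigma>,s),(f,h',c))) ` (Sigma (facs K \<tau>) (Gm K \<gamma>) \<times> (Gm K \<gamma> \<sigma> \<times> pth ps (qs - 1))) \<subseteq> Sigma ?Fb (Ixs K \<gamma>)"
      using facs_card[OF fsc _ cs(2)] cs(1) by (auto simp: Ixs_def)
    show "(\<lambda>((t,s),(f,h',c)). ((s,h'),(f,c))) ` Sigma ?Fb (Ixs K \<gamma>) \<subseteq> Sigma (facs K \<tau>) (Gm K \<gamma>) \<times> (Gm K \<gamma> \<sigma> \<times> pth ps (qs - 1))"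
      using facs_card[OF fsc _ cs(2)] cs(1) by (auto simp: Ixs_def)
  qed
  have s5: "red (Sigma ?Fb (Ixs K \<gamma>)) (\<lambda>(d,(f,h,a)). cr (card (fst d) - 1 + (card (snd d) - 1)) f h a)
      = red (Sigma (facs K \<tau>) (Gm K \<gamma>) \<times> (Gm K \<gamma> \<sigma> \<times> pth ps (qs - 1))) (\<lambda>((s,h'),(f,c)). cr m f h' c)"
  proof (subst red_bij[OF b3], rule red_cong)
    fix x assume "x \<in> Sigma (facs K \<tau>) (Gm K \<gamma>) \<times> (Gm K \<gamma> \<sigma> \<times> pth ps (qs - 1))"
    then obtain s h' f c where xe: "x = ((s,h'),(f,c))" and s: "s \<in> facs K \<tau>" by auto
    have "card \<sigma> - 1 + (card s - 1) = m" using facs_card[OF fsc s cs(2)] cs(1) n by simp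
    then show "((\<lambda>(d,(f,h,a)). cr (card (fst d) - 1 + (card (snd d) - 1)) f h a) \<circ> (\<lambda>((s,h'),(f,c)). ((\<sigma>,s),(f,h',c)))) x
        = (\<lambda>((s,h'),(f,c)). cr m f h' c) x" using xe by simp
  qed simp
  show ?thesis using s1 s2 s3 s4 s5 by simp
qed

lemma Crs_finite:
  assumes "finite_simplicial_complex K" "hom_almost_embedding K \<gamma>"
  shows "finite (Crs K \<gamma> c)"
  unfolding Crs_def by (rule finite_red[OF Ixs_finite[OF assms]])

lemma dfacet_split:
  "{d. dfacet K d (\<sigma>,\<tau>)} = (\<lambda>s. (s,\<tau>)) ` facs K \<sigma> \<union> (\<lambda>s. (\<sigma>,s)) ` facs K \<tau>"
  by (auto simp: dfacet_def facs_def image_iff)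

lemma cell_bd:
  assumes fsc: "finite_simplicial_complex K" and hae: "hom_almost_embedding K \<gamma>"
    and c: "c \<in> dcells K (Suc m)"
  shows "sbd (Suc m) (Crs K \<gamma> c) = red (Sigma {d. dfacet K d c} (Crs K \<gamma>)) snd"
proof -
  obtain \<sigma> \<tau> where ce: "c = (\<sigma>,\<tau>)" and K: "\<sigma> \<in> K" "\<tau> \<in> K" and cc: "card \<sigma> + card \<tau> = Suc m + 2"
    using c by (auto simp: dcells_def)
  define ps where "ps = card \<sigma> - 1"
  define qs where "qs = card \<tau> - 1"
  have cs: "card \<sigma> = Suc ps" "card \<tau> = Suc qs" using fsc_K(3)[OF fsc K(1)] fsc_K(3)[OF fsc K(2)] ps_def qs_def by auto
  have n: "ps + qs = Suc m" using cs cc by simp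
  let ?G = "Gm K \<gamma> \<sigma> \<times> Gm K \<gamma> \<tau>"
  let ?Pk = "{(a,k). a \<in> pth ps qs \<and> k \<le> Suc m}"
  let ?PA = "{(a,k). a \<in> pth ps qs \<and> aU (Suc m) a k}"
  let ?PB = "{(a,k). a \<in> pth ps qs \<and> bU (Suc m) a k}"
  let ?PC = "{(a,k). a \<in> pth ps qs \<and> k \<le> Suc m \<and> \<not> aU (Suc m) a k \<and> \<not> bU (Suc m) a k}"
  let ?V = "\<lambda>((f,h),(a,k)). singular_face (Suc m) k (cr (Suc m) f h a)"
  let ?\<phi> = "\<lambda>(f,h,a). cr (Suc m) f h a"
  have fG: "finite ?G" using Gm_finite[OF fsc hae] by simp
  have fI: "finite (Ixs K \<gamma> c)" by (rule Ixs_finite[OF fsc hae])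
  have Cr: "Crs K \<gamma> c = red (Ixs K \<gamma> c) ?\<phi>" using ce cs n by (simp add: Crs_def)
  have "sbd (Suc m) (Crs K \<gamma> c) = red (Crs K \<gamma> c \<times> {..Suc m}) (\<lambda>(f,k). singular_face (Suc m) k f)"
    by (rule sbd_red[OF Crs_finite[OF fsc hae]]) simp
  also have "\<dots> = red (Sigma (red (Ixs K \<gamma> c) ?\<phi>) (\<lambda>_. {..Suc m})) (\<lambda>(f,k). singular_face (Suc m) k f)"
    using Cr by simp
  also have "\<dots> = red (Sigma (Ixs K \<gamma> c) (\<lambda>i. (\<lambda>_. {..Suc m}) (?\<phi> i))) (\<lambda>(i,t). (\<lambda>(f,k). singular_face (Suc m) k f) (?\<phi> i, t))"
    by (rule red_group[OF fI]) simp
  also have "\<dots> = red (?G \<times> ?Pk) ?V"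
  proof -
    have b: "bij_betw (\<lambda>((f,h),(a,k)). ((f,h,a),k)) (?G \<times> ?Pk) (Sigma (Ixs K \<gamma> c) (\<lambda>_. {..Suc m}))"
      by (rule bij_betw_byWitness[where f'="\<lambda>((f,h,a),k). ((f,h),(a,k))"]) (auto simp: ce Ixs_def ps_def qs_def)
    show ?thesis by (subst red_bij[OF b]) (rule red_cong, auto)
  qed
  also have "\<dots> = symd (red (?G \<times> ?PA) ?V) (red (?G \<times> ?PB) ?V)"
  proof -
    have fP: "finite ?Pk" using finite_pairs_pth[of ps qs "\<lambda>_ _. True" "Suc m"] by simp
    have e: "?G \<times> ?Pk = (?G \<times> ?PA) \<union> ((?G \<times> ?PB) \<union> (?G \<times> ?PC))" by (auto simp: aU_def bU_def)
    have d1: "(?G \<times> ?PA) \<inter> ((?G \<times> ?PB) \<union> (?G \<times> ?PC)) = {}"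
      using aU_bU_disj[of _ ps qs] n by auto
    have d2: "(?G \<times> ?PB) \<inter> (?G \<times> ?PC) = {}" by auto
    have sA: "?PA \<subseteq> ?Pk" "?PB \<subseteq> ?Pk" "?PC \<subseteq> ?Pk" by (auto simp: aU_def bU_def)
    have fA: "finite (?G \<times> ?PA)" "finite (?G \<times> ?PB)" "finite (?G \<times> ?PC)"
      by (rule finite_cartesian_product[OF fG finite_subset[OF sA(1) fP]],
          rule finite_cartesian_product[OF fG finite_subset[OF sA(2) fP]],
          rule finite_cartesian_product[OF fG finite_subset[OF sA(3) fP]])
    have "red (?G \<times> ?Pk) ?V = symd (red (?G \<times> ?PA) ?V) (red ((?G \<times> ?PB) \<union> (?G \<times> ?PC)) ?V)"
      unfolding e by (rule red_union[OF fA(1) finite_UnI[OF fA(2) fA(3)] d1])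
    also have "red ((?G \<times> ?PB) \<union> (?G \<times> ?PC)) ?V = symd (red (?G \<times> ?PB) ?V) (red (?G \<times> ?PC) ?V)"
      by (rule red_union[OF fA(2) fA(3) d2])
    also have "red (?G \<times> ?PC) ?V = {}" by (rule partC[OF fG n])
    finally show ?thesis by (simp add: symd_def)
  qed
  also have "\<dots> = symd (red (Sigma ((\<lambda>s. (s,\<tau>)) ` facs K \<sigma>) (Crs K \<gamma>)) snd) (red (Sigma ((\<lambda>s. (\<sigma>,s)) ` facs K \<tau>) (Crs K \<gamma>)) snd)"
    using partA[OF fsc hae K cs n] partB[OF fsc hae K cs n] by simp
  also have "\<dots> = red (Sigma {d. dfacet K d c} (Crs K \<gamma>)) snd"
  proof -
    have e: "Sigma {d. dfacet K d c} (Crs K \<gamma>) = Sigma ((\<lambda>s. (s,\<tau>)) ` facs K \<sigma>) (Crs K \<gamma>) \<union> Sigma ((\<lambda>s. (\<sigma>,s)) ` facs K \<tau>) (Crs K \<gamma>)"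
      unfolding ce dfacet_split by auto
    have d: "Sigma ((\<lambda>s. (s,\<tau>)) ` facs K \<sigma>) (Crs K \<gamma>) \<inter> Sigma ((\<lambda>s. (\<sigma>,s)) ` facs K \<tau>) (Crs K \<gamma>) = {}"
    proof -
      have "\<sigma> \<notin> facs K \<sigma>" by (simp add: facs_def)
      then show ?thesis by auto
    qed
    have f: "finite (Sigma ((\<lambda>s. (s,\<tau>)) ` facs K \<sigma>) (Crs K \<gamma>))" "finite (Sigma ((\<lambda>s. (\<sigma>,s)) ` facs K \<tau>) (Crs K \<gamma>))"
      by (intro finite_SigmaI finite_imageI finite_facs[OF fsc K(1)] Crs_finite[OF fsc hae],
          intro finite_SigmaI finite_imageI finite_facs[OF fsc K(2)] Crs_finite[OF fsc hae])
    show ?thesis unfolding e by (rule red_union[symmetric, OF f d])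
  qed
  finally show ?thesis .
qed


definition gg :: "'v set set \<Rightarrow> (nat \<Rightarrow> 'v set set \<Rightarrow> ((nat \<Rightarrow> real) \<Rightarrow> 'a::real_normed_vector) set) \<Rightarrow> nat
   \<Rightarrow> ('v set \<times> 'v set) set \<Rightarrow> ((nat \<Rightarrow> real) \<Rightarrow> 'a) set" where
  "gg K \<gamma> p A = red (Sigma A (Crs K \<gamma>)) snd"

lemma dcells_finite:
  assumes "finite_simplicial_complex K"
  shows "finite (dcells K p)"
proof -
  have "dcells K p \<subseteq> K \<times> K" by (auto simp: dcells_def)
  moreover have "finite K" using assms by (simp add: finite_simplicial_complex_def)
  ultimately show ?thesis by (meson finite_SigmaI finite_subset)
qed

lemma gg_lin:
  assumes fsc: "finite_simplicial_complex K" and hae: "hom_almost_embedding K \<gamma>"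
    and "A \<subseteq> dcells K p" "B \<subseteq> dcells K p"
  shows "gg K \<gamma> p (symd A B) = symd (gg K \<gamma> p A) (gg K \<gamma> p B)"
proof -
  have "finite A" "finite B" using assms(3,4) dcells_finite[OF fsc, of p] by (meson finite_subset)+
  then show ?thesis unfolding gg_def by (rule red_Sigma_symd[OF _ _ Crs_finite[OF fsc hae]])
qed

lemma cell_dims:
  assumes fsc: "finite_simplicial_complex K" and c: "c \<in> dcells K p"
  shows "card (fst c) - 1 + (card (snd c) - 1) = p" "fst c \<in> K" "snd c \<in> K" "fst c \<inter> snd c = {}"
proof -
  obtain \<sigma> \<tau> where ce: "c = (\<sigma>,\<tau>)" and K: "\<sigma> \<in> K" "\<tau> \<in> K" "\<sigma> \<inter> \<tau> = {}" and cc: "card \<sigma> + card \<tau> = p + 2"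
    using c by (auto simp: dcells_def)
  have "card \<sigma> \<ge> 1" "card \<tau> \<ge> 1" using fsc_K(3)[OF fsc K(1)] fsc_K(3)[OF fsc K(2)] by auto
  then show "card (fst c) - 1 + (card (snd c) - 1) = p" using ce cc by simp
  show "fst c \<in> K" "snd c \<in> K" "fst c \<inter> snd c = {}" using ce K by auto
qed

lemma Crs_elem:
  assumes fsc: "finite_simplicial_complex K" and hae: "hom_almost_embedding K \<gamma>"
    and c: "c \<in> dcells K p" and z: "z \<in> Crs K \<gamma> c"
  shows "singular_simplex p (top_of_set (sphere 0 1)) z"
proof -
  note D = cell_dims[OF fsc c]
  have "z \<in> red (Ixs K \<gamma> c) (\<lambda>(f,h,a). cr (card (fst c) - 1 + (card (snd c) - 1)) f h a)"
    using z by (simp add: Crs_def)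
  then have "z \<in> (\<lambda>(f,h,a). cr (card (fst c) - 1 + (card (snd c) - 1)) f h a) ` Ixs K \<gamma> c"
    by (rule subsetD[OF red_subset])
  then obtain f h a where zf: "z = cr p f h a" and f: "f \<in> Gm K \<gamma> (fst c)" and h: "h \<in> Gm K \<gamma> (snd c)"
    and a: "a \<in> pth (card (fst c) - 1) (card (snd c) - 1)"
    using D(1) by (auto simp: Ixs_def)
  have "singular_simplex (card (fst c) - 1 + (card (snd c) - 1)) (top_of_set (sphere 0 1)) (cr (card (fst c) - 1 + (card (snd c) - 1)) f h a)"
  proof (rule cr_singular[OF a])
    show "singular_simplex (card (fst c) - 1) euclidean f" by (rule Gm_singular(1)[OF fsc hae f])
    show "singular_simplex (card (snd c) - 1) euclidean h" by (rule Gm_singular(1)[OF fsc hae h])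
    show "f y \<noteq> h w" if "y \<in> standard_simplex (card (fst c) - 1)" "w \<in> standard_simplex (card (snd c) - 1)" for y w
      by (rule Gm_disj[OF hae D(4) f h that])
  qed
  then show ?thesis using zf D(1) by simp
qed

lemma gg_zchain:
  assumes fsc: "finite_simplicial_complex K" and hae: "hom_almost_embedding K \<gamma>"
    and A: "A \<subseteq> dcells K p"
  shows "zchain p (top_of_set (sphere 0 1)) (gg K \<gamma> p A)"
proof -
  have fA: "finite A" using A dcells_finite[OF fsc, of p] by (rule finite_subset)
  have fS: "finite (Sigma A (Crs K \<gamma>))" using fA Crs_finite[OF fsc hae] by auto
  have "singular_simplex p (top_of_set (sphere 0 1)) z" if "z \<in> gg K \<gamma> p A" for z
  proof -
    have "z \<in> red (Sigma A (Crs K \<gamma>)) snd" using that by (simp add: gg_def)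
    then have "z \<in> snd ` Sigma A (Crs K \<gamma>)" by (rule subsetD[OF red_subset])
    then obtain c where "c \<in> A" "z \<in> Crs K \<gamma> c" by auto
    then show ?thesis using Crs_elem[OF fsc hae] A by blast
  qed
  then show ?thesis unfolding zchain_def gg_def using finite_red[OF fS] by (simp add: gg_def)
qed

lemma pth00: "pth 0 0 = {\<lambda>_. 0}"
  by (auto simp: pth_def fun_eq_iff) (metis not_gr0)

lemma gg_nontriv:
  assumes fsc: "finite_simplicial_complex K" and hae: "hom_almost_embedding K \<gamma>"
    and c: "({v}, {w}) \<in> dcells K 0"
  shows "odd (card (gg K \<gamma> 0 {({v}, {w})}))"
proof -
  have K: "{v} \<in> K" "{w} \<in> K" using c by (auto simp: dcells_def)
  have "gg K \<gamma> 0 {({v}, {w})} = Crs K \<gamma> ({v}, {w})"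
  proof -
    have "Sigma {({v}, {w})} (Crs K \<gamma>) = Sigma {({v}, {w})} (\<lambda>_. Crs K \<gamma> ({v}, {w}))" by auto
    then show ?thesis unfolding gg_def using red_singleton_id[OF Crs_finite[OF fsc hae]] by simp
  qed
  moreover have "odd (card (Crs K \<gamma> ({v}, {w})))"
    unfolding Crs_def
  proof (subst red_card_parity[OF Ixs_finite[OF fsc hae]])
    have "odd (card (\<gamma> 0 {{v}}))" "odd (card (\<gamma> 0 {{w}}))"
      using hae K unfolding hom_almost_embedding_def by auto
    moreover have "Ixs K \<gamma> ({v}, {w}) = \<gamma> 0 {{v}} \<times> \<gamma> 0 {{w}} \<times> {\<lambda>_. 0}"
      using K by (simp add: Ixs_def Gm_def pth00)
    ultimately show "odd (card (Ixs K \<gamma> ({v}, {w})))" by (simp add: card_cartesian_product)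
  qed
  ultimately show ?thesis by simp
qed

lemma Fac_finite:
  assumes fsc: "finite_simplicial_complex K" and c: "c \<in> dcells K p"
  shows "finite {d. dfacet K d c}"
proof -
  obtain \<sigma> \<tau> where ce: "c = (\<sigma>,\<tau>)" and K: "\<sigma> \<in> K" "\<tau> \<in> K" using c by (auto simp: dcells_def)
  show ?thesis unfolding ce dfacet_split using finite_facs[OF fsc K(1)] finite_facs[OF fsc K(2)] by simp
qed

lemma dbd_red:
  assumes "finite A"
  shows "dbd K A = red (Sigma A (\<lambda>c. {d. dfacet K d c})) snd"
proof -
  have "card {x\<in>Sigma A (\<lambda>c. {d. dfacet K d c}). snd x = z} = card {d\<in>A. dfacet K z d}" for z
  proof -
    have "{x\<in>Sigma A (\<lambda>c. {d. dfacet K d c}). snd x = z} = (\<lambda>d. (d,z)) ` {d\<in>A. dfacet K z d}" by auto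
    moreover have "inj_on (\<lambda>d. (d,z)) {d\<in>A. dfacet K z d}" by (auto simp: inj_on_def)
    ultimately show ?thesis by (simp add: card_image)
  qed
  then show ?thesis by (simp add: dbd_def red_def)
qed

lemma gg_bd:
  assumes fsc: "finite_simplicial_complex K" and hae: "hom_almost_embedding K \<gamma>"
    and A: "A \<subseteq> dcells K (Suc m)"
  shows "sbd (Suc m) (gg K \<gamma> (Suc m) A) = gg K \<gamma> m (dbd K A)"
proof -
  let ?Fac = "\<lambda>c. {d. dfacet K d c}"
  let ?C = "Crs K \<gamma>"
  have fA: "finite A" using A dcells_finite[OF fsc, of "Suc m"] by (rule finite_subset)
  have fC: "\<And>c. finite (?C c)" by (rule Crs_finite[OF fsc hae])
  have fS: "finite (Sigma A ?C)" using fA fC by auto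
  have fF: "\<And>c. c \<in> A \<Longrightarrow> finite (?Fac c)" using Fac_finite[OF fsc] A by blast
  have "sbd (Suc m) (gg K \<gamma> (Suc m) A) = red (red (Sigma A ?C) snd \<times> {..Suc m}) (\<lambda>(f,k). singular_face (Suc m) k f)"
    unfolding gg_def by (rule sbd_red[OF finite_red[OF fS]]) simp
  also have "\<dots> = red (Sigma (Sigma A ?C) (\<lambda>i. (\<lambda>_. {..Suc m}) (snd i))) (\<lambda>(i,t). (\<lambda>(f,k). singular_face (Suc m) k f) (snd i, t))"
    by (rule red_group[OF fS]) simp
  also have "\<dots> = red (Sigma A (\<lambda>c. ?C c \<times> {..Suc m})) (\<lambda>(c,(z,k)). singular_face (Suc m) k z)"
  proof -
    have b: "bij_betw (\<lambda>(c,(z,k)). ((c,z),k)) (Sigma A (\<lambda>c. ?C c \<times> {..Suc m})) (Sigma (Sigma A ?C) (\<lambda>i. (\<lambda>_. {..Suc m}) (snd i)))"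
      by (rule bij_betw_byWitness[where f'="\<lambda>((c,z),k). (c,(z,k))"]) auto
    show ?thesis by (subst red_bij[OF b]) (rule red_cong, auto)
  qed
  also have "\<dots> = red (Sigma A (\<lambda>c. red (?C c \<times> {..Suc m}) (\<lambda>(z,k). singular_face (Suc m) k z))) snd"
    by (rule red_flat[symmetric]) (use fA fC in auto)
  also have "\<dots> = red (Sigma A (\<lambda>c. sbd (Suc m) (?C c))) snd"
  proof -
    have "Sigma A (\<lambda>c. red (?C c \<times> {..Suc m}) (\<lambda>(z,k). singular_face (Suc m) k z)) = Sigma A (\<lambda>c. sbd (Suc m) (?C c))"
      using sbd_red[OF fC, of "Suc m"] by simp
    then show ?thesis by simp
  qed
  also have "\<dots> = red (Sigma A (\<lambda>c. red (Sigma (?Fac c) ?C) snd)) snd"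
  proof -
    have "Sigma A (\<lambda>c. sbd (Suc m) (?C c)) = Sigma A (\<lambda>c. red (Sigma (?Fac c) ?C) snd)"
      using cell_bd[OF fsc hae] A by auto
    then show ?thesis by simp
  qed
  also have "\<dots> = red (Sigma A (\<lambda>c. Sigma (?Fac c) ?C)) (\<lambda>(c,(d,z)). z)"
  proof -
    have e1: "red (Sigma A (\<lambda>c. red (Sigma (?Fac c) ?C) ((\<lambda>_. snd) c))) snd = red (Sigma A (\<lambda>c. Sigma (?Fac c) ?C)) (\<lambda>(c,j). (\<lambda>_. snd) c j)"
      by (rule red_flat) (use fA fF fC in auto)
    have e2: "(\<lambda>(c,j). (\<lambda>_. snd) c j) = (\<lambda>(c,(d,z)). z)" by auto
    show ?thesis using e1 unfolding e2 by simp
  qed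
  also have "\<dots> = red (Sigma (Sigma A ?Fac) (\<lambda>i. ?C (snd i))) (\<lambda>(i,t). snd (snd i, t))"
  proof -
    have b: "bij_betw (\<lambda>((c,d),z). (c,(d,z))) (Sigma (Sigma A ?Fac) (\<lambda>i. ?C (snd i))) (Sigma A (\<lambda>c. Sigma (?Fac c) ?C))"
      by (rule bij_betw_byWitness[where f'="\<lambda>(c,(d,z)). ((c,d),z)"]) auto
    show ?thesis by (subst red_bij[OF b]) (rule red_cong, auto)
  qed
  also have "\<dots> = red (Sigma (red (Sigma A ?Fac) snd) ?C) snd"
    by (rule red_group[symmetric]) (use fA fF fC in auto)
  also have "\<dots> = gg K \<gamma> m (dbd K A)"
    unfolding gg_def dbd_red[OF fA] ..
  finally show ?thesis .
qed

lemma Crs_extensional: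
  assumes fsc: "finite_simplicial_complex K" and c: "c \<in> dcells K p" and z: "z \<in> Crs K \<gamma> c"
  shows "z \<in> extensional (standard_simplex p)"
proof -
  have "z \<in> red (Ixs K \<gamma> c) (\<lambda>(f,h,a). cr (card (fst c) - 1 + (card (snd c) - 1)) f h a)"
    using z by (simp add: Crs_def)
  then have "z \<in> (\<lambda>(f,h,a). cr (card (fst c) - 1 + (card (snd c) - 1)) f h a) ` Ixs K \<gamma> c"
    by (rule subsetD[OF red_subset])
  then show ?thesis using cell_dims(1)[OF fsc c] by (auto simp: cr_def crl_def)
qed

lemma Crs_swap:
  fixes \<gamma> :: "nat \<Rightarrow> 'v set set \<Rightarrow> ((nat \<Rightarrow> real) \<Rightarrow> 'a::real_normed_vector) set"
  assumes fsc: "finite_simplicial_complex K" and c: "(\<sigma>,\<tau>) \<in> dcells K p"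
  shows "Crs K \<gamma> (\<tau>,\<sigma>) = simplex_map p uminus ` Crs K \<gamma> (\<sigma>,\<tau>)"
proof -
  define ps where "ps = card \<sigma> - 1"
  define qs where "qs = card \<tau> - 1"
  have n: "ps + qs = p" using cell_dims(1)[OF fsc c] ps_def qs_def by simp
  let ?m = "simplex_map p (uminus :: 'a \<Rightarrow> 'a)"
  have I1: "Ixs K \<gamma> (\<sigma>,\<tau>) = Gm K \<gamma> \<sigma> \<times> Gm K \<gamma> \<tau> \<times> pth ps qs" by (simp add: Ixs_def ps_def qs_def)
  have I2: "Ixs K \<gamma> (\<tau>,\<sigma>) = Gm K \<gamma> \<tau> \<times> Gm K \<gamma> \<sigma> \<times> pth qs ps" by (simp add: Ixs_def ps_def qs_def)
  have C1: "Crs K \<gamma> (\<sigma>,\<tau>) = red (Gm K \<gamma> \<sigma> \<times> Gm K \<gamma> \<tau> \<times> pth ps qs) (\<lambda>(f,h,a). cr p f h a)"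
    unfolding Crs_def I1 using n ps_def qs_def by simp
  have C2: "Crs K \<gamma> (\<tau>,\<sigma>) = red (Gm K \<gamma> \<tau> \<times> Gm K \<gamma> \<sigma> \<times> pth qs ps) (\<lambda>(h,f,a). cr p h f a)"
    unfolding Crs_def I2 using n ps_def qs_def by (simp add: add.commute)
  have bt: "bij_betw (tr (ps+qs)) (pth ps qs) (pth qs ps)" by (rule bij_tr)
  have b: "bij_betw (\<lambda>(f,h,a). (h,f,tr p a)) (Gm K \<gamma> \<sigma> \<times> Gm K \<gamma> \<tau> \<times> pth ps qs) (Gm K \<gamma> \<tau> \<times> Gm K \<gamma> \<sigma> \<times> pth qs ps)"
  proof -
    have i: "inj_on (tr p) (pth ps qs)" "tr p ` pth ps qs = pth qs ps" using bt n by (auto simp: bij_betw_def)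
    have "inj_on (\<lambda>(f,h,a). (h,f,tr p a)) (Gm K \<gamma> \<sigma> \<times> Gm K \<gamma> \<tau> \<times> pth ps qs)"
      using i(1) by (auto simp: inj_on_def)
    moreover have "(\<lambda>(f,h,a). (h,f,tr p a)) ` (Gm K \<gamma> \<sigma> \<times> Gm K \<gamma> \<tau> \<times> pth ps qs) = Gm K \<gamma> \<tau> \<times> Gm K \<gamma> \<sigma> \<times> pth qs ps"
    proof (intro equalityI subsetI)
      fix x assume "x \<in> (\<lambda>(f,h,a). (h,f,tr p a)) ` (Gm K \<gamma> \<sigma> \<times> Gm K \<gamma> \<tau> \<times> pth ps qs)"
      then show "x \<in> Gm K \<gamma> \<tau> \<times> Gm K \<gamma> \<sigma> \<times> pth qs ps" using i(2) by auto
    next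
      fix x assume "x \<in> Gm K \<gamma> \<tau> \<times> Gm K \<gamma> \<sigma> \<times> pth qs ps"
      then obtain h f a' where x: "x = (h,f,a')" "h \<in> Gm K \<gamma> \<tau>" "f \<in> Gm K \<gamma> \<sigma>" "a' \<in> pth qs ps" by auto
      then obtain a where "a \<in> pth ps qs" "tr p a = a'" using i(2) by (metis imageE)
      then show "x \<in> (\<lambda>(f,h,a). (h,f,tr p a)) ` (Gm K \<gamma> \<sigma> \<times> Gm K \<gamma> \<tau> \<times> pth ps qs)" using x by force
    qed
    ultimately show ?thesis by (simp add: bij_betw_def)
  qed
  have "Crs K \<gamma> (\<tau>,\<sigma>) = red (Gm K \<gamma> \<sigma> \<times> Gm K \<gamma> \<tau> \<times> pth ps qs) ((\<lambda>(h,f,a). cr p h f a) \<circ> (\<lambda>(f,h,a). (h,f,tr p a)))"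
    unfolding C2 by (rule red_bij[OF b])
  also have "\<dots> = red (Gm K \<gamma> \<sigma> \<times> Gm K \<gamma> \<tau> \<times> pth ps qs) (?m \<circ> (\<lambda>(f,h,a). cr p f h a))"
  proof (rule red_cong)
    fix x assume "x \<in> Gm K \<gamma> \<sigma> \<times> Gm K \<gamma> \<tau> \<times> pth ps qs"
    then obtain f h a where x: "x = (f,h,a)" and a: "a \<in> pth ps qs" by auto
    show "((\<lambda>(h,f,a). cr p h f a) \<circ> (\<lambda>(f,h,a). (h,f,tr p a))) x = (?m \<circ> (\<lambda>(f,h,a). cr p f h a)) x"
      using cr_swap[OF a, of h f] n x by simp
  qed simp
  also have "\<dots> = ?m ` Crs K \<gamma> (\<sigma>,\<tau>)"
    unfolding C1
  proof (rule red_inj_image)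
    have "(\<lambda>(f,h,a). cr p f h a) ` (Gm K \<gamma> \<sigma> \<times> Gm K \<gamma> \<tau> \<times> pth ps qs) \<subseteq> extensional (standard_simplex p)"
      by (auto simp: cr_def crl_def)
    then show "inj_on ?m ((\<lambda>(f,h,a). cr p f h a) ` (Gm K \<gamma> \<sigma> \<times> Gm K \<gamma> \<tau> \<times> pth ps qs))"
      using inj_simplex_map_uminus inj_on_subset by blast
  qed
  finally show ?thesis .
qed

lemma gg_swap:
  fixes \<gamma> :: "nat \<Rightarrow> 'v set set \<Rightarrow> ((nat \<Rightarrow> real) \<Rightarrow> 'a::real_normed_vector) set"
  assumes fsc: "finite_simplicial_complex K" and A: "A \<subseteq> dcells K p"
  shows "gg K \<gamma> p (dswap A) = santi p (gg K \<gamma> p A)"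
proof -
  let ?m = "simplex_map p (uminus :: 'a \<Rightarrow> 'a)"
  let ?sw = "\<lambda>(\<sigma>::'v set, \<tau>::'v set). (\<tau>, \<sigma>)"
  let ?C = "Crs K \<gamma>"
  let ?e = "\<lambda>(c,z). (?sw c, ?m z)"
  have sw: "\<And>c. c \<in> A \<Longrightarrow> ?C (?sw c) = ?m ` ?C c"
    using Crs_swap[OF fsc] A by fastforce
  have ext: "\<And>c z. c \<in> A \<Longrightarrow> z \<in> ?C c \<Longrightarrow> z \<in> extensional (standard_simplex p)"
    using Crs_extensional[OF fsc] A by blast
  have mm: "\<And>z. z \<in> extensional (standard_simplex p) \<Longrightarrow> ?m (?m z) = z"
    by (rule simplex_map_uminus_inv)
  have mext: "\<And>z. ?m z \<in> extensional (standard_simplex p)" by (simp add: simplex_map_def)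
  have b: "bij_betw ?e (Sigma A ?C) (Sigma (?sw ` A) ?C)"
  proof (rule bij_betw_byWitness[where f'="?e"])
    have swsw: "\<And>c. ?sw (?sw c) = c" by (auto split: prod.splits)
    show "\<forall>x\<in>Sigma A ?C. ?e (?e x) = x"
    proof
      fix x assume "x \<in> Sigma A ?C"
      then obtain c z where x: "x = (c,z)" "c \<in> A" "z \<in> ?C c" by auto
      then have "?m (?m z) = z" using mm ext by blast
      then show "?e (?e x) = x" using x swsw by simp
    qed
    show "\<forall>y\<in>Sigma (?sw ` A) ?C. ?e (?e y) = y"
    proof
      fix y assume "y \<in> Sigma (?sw ` A) ?C"
      then obtain c z where y: "y = (?sw c,z)" "c \<in> A" "z \<in> ?C (?sw c)" by auto
      then obtain z0 where "z = ?m z0" using sw by blast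
      then have "?m (?m z) = z" using mm mext by simp
      then show "?e (?e y) = y" using y swsw by simp
    qed
    show "?e ` Sigma A ?C \<subseteq> Sigma (?sw ` A) ?C"
    proof
      fix y assume "y \<in> ?e ` Sigma A ?C"
      then obtain c z where y: "y = (?sw c, ?m z)" "c \<in> A" "z \<in> ?C c" by auto
      then have "?m z \<in> ?C (?sw c)" using sw by blast
      then show "y \<in> Sigma (?sw ` A) ?C" using y by blast
    qed
    show "?e ` Sigma (?sw ` A) ?C \<subseteq> Sigma A ?C"
    proof
      fix y assume "y \<in> ?e ` Sigma (?sw ` A) ?C"
      then obtain c z where c: "c \<in> A" and z: "z \<in> ?C (?sw c)" and y: "y = ?e (?sw c, z)" by auto
      obtain z0 where z0: "z0 \<in> ?C c" "z = ?m z0" using z sw[OF c] by auto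
      have "?m z = z0" using z0 mm ext[OF c z0(1)] by simp
      moreover have "?sw (?sw c) = c" by (auto split: prod.splits)
      ultimately show "y \<in> Sigma A ?C" using y c z0 by auto
    qed
  qed
  have "gg K \<gamma> p (dswap A) = red (Sigma (?sw ` A) ?C) snd" by (simp add: gg_def dswap_def)
  also have "\<dots> = red (Sigma A ?C) (snd \<circ> ?e)" by (rule red_bij[OF b])
  also have "\<dots> = red (Sigma A ?C) (?m \<circ> snd)" by (rule red_cong) auto
  also have "\<dots> = ?m ` red (Sigma A ?C) snd"
  proof (rule red_inj_image)
    have "snd ` Sigma A ?C \<subseteq> extensional (standard_simplex p)" using ext by auto
    then show "inj_on ?m (snd ` Sigma A ?C)" using inj_simplex_map_uminus inj_on_subset by blast
  qed
  finally show ?thesis by (simp add: santi_def gg_def)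
qed

theorem main:
  fixes K :: "'v set set"
    and \<gamma> :: "nat \<Rightarrow> 'v set set \<Rightarrow> ((nat \<Rightarrow> real) \<Rightarrow> real^'n) set"
  assumes fsc: "finite_simplicial_complex K"
    and hae: "hom_almost_embedding K \<gamma>"
  shows "\<exists>g :: nat \<Rightarrow> ('v set \<times> 'v set) set \<Rightarrow> ((nat \<Rightarrow> real) \<Rightarrow> real^'n) set.
           nontrivial_equivariant_sphere_map K g"
proof (intro exI)
  show "nontrivial_equivariant_sphere_map K (gg K \<gamma>)"
    unfolding nontrivial_equivariant_sphere_map_def zchain_map_def
  proof (intro conjI allI impI)
    fix p A B assume "A \<subseteq> dcells K p" "B \<subseteq> dcells K p"
    then show "gg K \<gamma> p (symd A B) = symd (gg K \<gamma> p A) (gg K \<gamma> p B)" by (rule gg_lin[OF fsc hae])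
  next
    fix p A assume "A \<subseteq> dcells K p"
    then show "zchain p (top_of_set (sphere 0 1)) (gg K \<gamma> p A)" by (rule gg_zchain[OF fsc hae])
  next
    fix p A assume "A \<subseteq> dcells K (Suc p)"
    then show "sbd (Suc p) (gg K \<gamma> (Suc p) A) = gg K \<gamma> p (dbd K A)" by (rule gg_bd[OF fsc hae])
  next
    fix p A assume "A \<subseteq> dcells K p"
    then show "gg K \<gamma> p (dswap A) = santi p (gg K \<gamma> p A)" by (rule gg_swap[OF fsc])
  next
    fix v w assume "({v},{w}) \<in> dcells K 0"
    then show "odd (card (gg K \<gamma> 0 {({v},{w})}))" by (rule gg_nontriv[OF fsc hae])
  qed
qed


theorem lemma19:
  fixes K :: "'v set set"
    and \<gamma> :: "nat \<Rightarrow> 'v set set \<Rightarrow> ((nat \<Rightarrow> real) \<Rightarrow> real^'n) set"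
  assumes "finite_simplicial_complex K"
    and "hom_almost_embedding K \<gamma>"
  shows "\<exists>g :: nat \<Rightarrow> ('v set \<times> 'v set) set \<Rightarrow> ((nat \<Rightarrow> real) \<Rightarrow> real^'n) set.
           nontrivial_equivariant_sphere_map K g"
  by (rule main[OF assms])

end
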